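(* Let $X$ and $Y$ be Banach spaces and let $T\in B(X)$ and $S\in B(Y)$ be non-zero compact operators. If $T$ and $S$ are equivalent after extension, then $I_T=I_S$, i.e. $I_T(Z_1,Z_2)=I_S(Z_1,Z_2)$ for all Banach spaces $Z_1,Z_2$.
   Context: All Banach spaces are complex; $B(X,Y)$ denotes the bounded linear operators from $X$ to $Y$, $B(X)=B(X,X)$; invertibility means having a bounded inverse. $X\oplus Y$ denotes the $\ell^2$-direct sum and $\mathrm{id}_X$ the identity on $X$. Operators $T\in B(X)$ and $S\in B(Y)$ are called equivalent after extension if there exist Banach spaces $X'$, $Y'$ and invertible operators $E\in B(Y\oplus Y',X\oplus X')$ and $F\in B(X\oplus X',Y\oplus Y')$ with $\begin{bmatrix}T&0\\0&\mathrm{id}_{X'}\end{bmatrix}=E\begin{bmatrix}S&0\\0&\mathrm{id}_{Y'}\end{bmatrix}F$. For an operator $T\in B(X,Y)$ and Banach spaces $Z_1,Z_2$, define $I_T(Z_1,Z_2)=\bigcup_{n\in\mathbb N}\{\sum_{j=1}^n R_jTR_j' : R_j\in B(Y,Z_2),\ R_j'\in B(Z_1,X)\}$; the operator ideal generated by $T$ is the class $I_T=\bigcup_{Z_1,Z_2}I_T(Z_1,Z_2)$. *)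

theory Defs
  imports "HOL-Analysis.Analysis"
begin

class complex_banach = banach +
  fixes cscale :: "complex \<Rightarrow> 'a \<Rightarrow> 'a"
  assumes cscale_of_real: "cscale (complex_of_real r) x = scaleR r x"
    and cscale_add_right: "cscale a (x + y) = cscale a x + cscale a y"
    and cscale_add_left: "cscale (a + b) x = cscale a x + cscale b x"
    and cscale_assoc: "cscale a (cscale b x) = cscale (a * b) x"
    and norm_cscale: "norm (cscale a x) = cmod a * norm x"

text \<open>The l2 direct sum: Isabelle's product norm is already
sqrt (norm x ^ 2 + norm y ^ 2).\<close>

instantiation prod :: (complex_banach, complex_banach) complex_banach
begin
definition cscale_prod :: "complex \<Rightarrow> 'a \<times> 'b \<Rightarrow> 'a \<times> 'b" where
  "cscale_prod c p = (cscale c (fst p), cscale c (snd p))"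
instance
proof
  fix r :: real and x :: "'a \<times> 'b"
  show "cscale (complex_of_real r) x = scaleR r x"
    by (simp add: cscale_prod_def cscale_of_real scaleR_prod_def)
next
  fix a :: complex and x y :: "'a \<times> 'b"
  show "cscale a (x + y) = cscale a x + cscale a y"
    by (simp add: cscale_prod_def cscale_add_right)
next
  fix a b :: complex and x :: "'a \<times> 'b"
  show "cscale (a + b) x = cscale a x + cscale b x"
    by (simp add: cscale_prod_def cscale_add_left)
next
  fix a b :: complex and x :: "'a \<times> 'b"
  show "cscale a (cscale b x) = cscale (a * b) x"
    by (simp add: cscale_prod_def cscale_assoc)
next
  fix a :: complex and x :: "'a \<times> 'b"
  have "norm (cscale a x) = sqrt ((cmod a)\<^sup>2 * ((norm (fst x))\<^sup>2 + (norm (snd x))\<^sup>2))"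
    by (simp add: cscale_prod_def norm_prod_def norm_cscale power_mult_distrib algebra_simps)
  also have "\<dots> = cmod a * norm x"
    by (simp add: real_sqrt_mult norm_prod_def)
  finally show "norm (cscale a x) = cmod a * norm x" .
qed
end

definition bop :: "('a::complex_banach \<Rightarrow> 'b::complex_banach) \<Rightarrow> bool" where
  "bop f \<longleftrightarrow> bounded_linear f \<and> (\<forall>c x. f (cscale c x) = cscale c (f x))"

definition invertible_op :: "('a::complex_banach \<Rightarrow> 'b::complex_banach) \<Rightarrow> bool" where
  "invertible_op f \<longleftrightarrow> bop f \<and> (\<exists>g. bop g \<and> g \<circ> f = id \<and> f \<circ> g = id)"

definition compact_op :: "('a::complex_banach \<Rightarrow> 'b::complex_banach) \<Rightarrow> bool" where
  "compact_op f \<longleftrightarrow> bop f \<and> compact (closure (f ` cball 0 1))"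

text \<open>Witnesses of equivalence after extension, for given extension spaces
(the types 'x2 and 'y2 of the second components).\<close>
definition equiv_after_ext_via ::
  "('x::complex_banach \<Rightarrow> 'x) \<Rightarrow> ('y::complex_banach \<Rightarrow> 'y)
   \<Rightarrow> ('y \<times> 'y2::complex_banach \<Rightarrow> 'x \<times> 'x2::complex_banach)
   \<Rightarrow> ('x \<times> 'x2 \<Rightarrow> 'y \<times> 'y2) \<Rightarrow> bool" where
  "equiv_after_ext_via T S E F \<longleftrightarrow>
     invertible_op E \<and> invertible_op F \<and>
     (\<lambda>(x, x'). (T x, x')) = E \<circ> (\<lambda>(y, y'). (S y, y')) \<circ> F"

text \<open>I_T(Z1,Z2): the component of the operator ideal generated by T.\<close>
definition op_ideal ::
  "('x::complex_banach \<Rightarrow> 'y::complex_banach)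
   \<Rightarrow> ('z1::complex_banach \<Rightarrow> 'z2::complex_banach) set" where
  "op_ideal T = {(\<lambda>z. \<Sum>j<n. R j (T (R' j z))) | n (R :: nat \<Rightarrow> 'y \<Rightarrow> 'z2) (R' :: nat \<Rightarrow> 'z1 \<Rightarrow> 'x).
                    \<forall>j<n. bop (R j) \<and> bop (R' j)}"

end

theory Submission
  imports Defs
begin



lemma cscale_zero_right[simp]: "cscale c (0::'a::complex_banach) = 0"
  using cscale_add_right[of c "0::'a" 0] by simp

lemma cscale_zero_left[simp]: "cscale 0 (x::'a::complex_banach) = 0"
  using cscale_of_real[of 0 x] by simp

lemma cscale_one[simp]: "cscale 1 (x::'a::complex_banach) = x"
  using cscale_of_real[of 1 x] by simp

lemma cscale_minus_right: "cscale c (- x) = - cscale c (x::'a::complex_banach)"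
  using cscale_add_right[of c x "-x"] by (simp add: eq_neg_iff_add_eq_0 add.commute)

lemma cscale_diff_right: "cscale c (x - y) = cscale c x - cscale c (y::'a::complex_banach)"
  using cscale_add_right[of c x "-y"] by (simp add: cscale_minus_right)

lemma cscale_sum_right: "cscale c (\<Sum>i\<in>I. f i) = (\<Sum>i\<in>I. cscale c (f i::'a::complex_banach))"
  by (induction I rule: infinite_finite_induct) (auto simp: cscale_add_right)

lemma cscale_real_mult: "cscale (complex_of_real r * a) x = r *\<^sub>R cscale a (x::'a::complex_banach)"
  by (metis cscale_assoc cscale_of_real)

lemma bopI: "bounded_linear f \<Longrightarrow> (\<And>c x. f (cscale c x) = cscale c (f x)) \<Longrightarrow> bop f"
  by (simp add: bop_def)

lemma bop_bl: "bop f \<Longrightarrow> bounded_linear f" by (simp add: bop_def)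
lemma bop_cs: "bop f \<Longrightarrow> f (cscale c x) = cscale c (f x)" by (simp add: bop_def)

lemma bop_comp: "bop f \<Longrightarrow> bop g \<Longrightarrow> bop (\<lambda>x. f (g x))"
  by (auto simp: bop_def intro: bounded_linear_compose)

lemma bop_comp': "bop f \<Longrightarrow> bop g \<Longrightarrow> bop (f \<circ> g)"
  using bop_comp[of f g] by (simp add: comp_def)

lemma bop_add: "bop f \<Longrightarrow> bop g \<Longrightarrow> bop (\<lambda>x. f x + g x)"
  by (auto simp: bop_def cscale_add_right intro: bounded_linear_add)

lemma bop_diff: "bop f \<Longrightarrow> bop g \<Longrightarrow> bop (\<lambda>x. f x - g x)"
  by (auto simp: bop_def cscale_diff_right intro: bounded_linear_sub)

lemma bop_id: "bop (\<lambda>x. x)" by (simp add: bop_def bounded_linear_ident)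

lemma bop_zero: "bop (\<lambda>x. 0)" by (simp add: bop_def bounded_linear_zero)

lemma bop_fst: "bop fst" by (simp add: bop_def bounded_linear_fst cscale_prod_def)
lemma bop_snd: "bop snd" by (simp add: bop_def bounded_linear_snd cscale_prod_def)
lemma bop_inl: "bop (\<lambda>x. (x, 0))"
  by (simp add: bop_def cscale_prod_def bounded_linear_Pair bounded_linear_ident bounded_linear_zero)
lemma bop_inr: "bop (\<lambda>x. (0, x))"
  by (simp add: bop_def cscale_prod_def bounded_linear_Pair bounded_linear_ident bounded_linear_zero)

lemma bop_sum: "(\<And>i. i \<in> I \<Longrightarrow> bop (f i)) \<Longrightarrow> bop (\<lambda>x. \<Sum>i\<in>I. f i x)"
proof (induction I rule: infinite_finite_induct)
  case (infinite A) then show ?case by (simp add: bop_zero)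
next
  case empty then show ?case by (simp add: bop_zero)
next
  case (insert x F) then show ?case by (simp add: bop_add)
qed

lemma op_ideal_iff: "M \<in> op_ideal T \<longleftrightarrow> (\<exists>(n::nat) R R'. (\<forall>j<n. bop (R j) \<and> bop (R' j)) \<and> M = (\<lambda>z. \<Sum>j<n. R j (T (R' j z))))"
  unfolding op_ideal_def mem_Collect_eq by blast

lemma op_idealI: "(\<And>j. j<(n::nat) \<Longrightarrow> bop (R j) \<and> bop (R' j)) \<Longrightarrow> M = (\<lambda>z. \<Sum>j<n. R j (T (R' j z))) \<Longrightarrow> M \<in> op_ideal T"
  unfolding op_ideal_iff by blast

lemma op_ideal_zero: "(\<lambda>z. 0) \<in> op_ideal T"
  by (rule op_idealI[of 0]) auto

lemma op_ideal_single: "bop R \<Longrightarrow> bop R' \<Longrightarrow> (\<lambda>z. R (T (R' z))) \<in> op_ideal T"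
  by (rule op_idealI[of 1 "\<lambda>_. R" "\<lambda>_. R'"]) (auto simp: lessThan_Suc)

lemma op_ideal_add:
  assumes "M1 \<in> op_ideal T" "M2 \<in> op_ideal T"
  shows "(\<lambda>z. M1 z + M2 z) \<in> op_ideal T"
proof -
  obtain n1 R1 R1' where 1: "\<forall>j<(n1::nat). bop (R1 j) \<and> bop (R1' j)" "M1 = (\<lambda>z. \<Sum>j<n1. R1 j (T (R1' j z)))"
    using assms(1) unfolding op_ideal_iff by blast
  obtain n2 R2 R2' where 2: "\<forall>j<(n2::nat). bop (R2 j) \<and> bop (R2' j)" "M2 = (\<lambda>z. \<Sum>j<n2. R2 j (T (R2' j z)))"
    using assms(2) unfolding op_ideal_iff by blast
  define R where "R j = (if j < n1 then R1 j else R2 (j - n1))" for j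
  define R' where "R' j = (if j < n1 then R1' j else R2' (j - n1))" for j
  show ?thesis
  proof (rule op_idealI[of "n1 + n2" R R'])
    fix j assume "j < n1 + n2" then show "bop (R j) \<and> bop (R' j)"
      using 1 2 by (auto simp: R_def R'_def)
  next
    show "(\<lambda>z. M1 z + M2 z) = (\<lambda>z. \<Sum>j<n1 + n2. R j (T (R' j z)))"
    proof
      fix z
      have "(\<Sum>j<n1 + n2. R j (T (R' j z))) = (\<Sum>j<n1. R j (T (R' j z))) + (\<Sum>j<n2. R (n1 + j) (T (R' (n1 + j) z)))"
        by (induction n2) (simp_all add: add.assoc)
      also have "\<dots> = M1 z + M2 z" using 1 2 by (simp add: R_def R'_def)
      finally show "M1 z + M2 z = (\<Sum>j<n1 + n2. R j (T (R' j z)))" by simp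
    qed
  qed
qed

lemma op_ideal_sum: "(\<And>i. i \<in> I \<Longrightarrow> M i \<in> op_ideal T) \<Longrightarrow> (\<lambda>z. \<Sum>i\<in>I. M i z) \<in> op_ideal T"
proof (induction I rule: infinite_finite_induct)
  case (infinite A) then show ?case by (simp add: op_ideal_zero)
next
  case empty then show ?case by (simp add: op_ideal_zero)
next
  case (insert x F) then show ?case using op_ideal_add[of "M x" T "\<lambda>z. \<Sum>i\<in>F. M i z"] by simp
qed

lemma op_ideal_comp:
  assumes "M \<in> op_ideal T" "bop A" "bop B"
  shows "(\<lambda>z. A (M (B z))) \<in> op_ideal T"
proof -
  obtain n R R' where 1: "\<forall>j<(n::nat). bop (R j) \<and> bop (R' j)" "M = (\<lambda>z. \<Sum>j<n. R j (T (R' j z)))"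
    using assms(1) unfolding op_ideal_iff by blast
  have lin: "linear A" using assms(2) bop_bl bounded_linear.linear by blast
  show ?thesis
    apply (rule op_idealI[of n "\<lambda>j x. A (R j x)" "\<lambda>j x. R' j (B x)"])
    using 1 assms by (auto simp: bop_comp linear_sum[OF lin])
qed

lemma op_ideal_trans:
  assumes "T \<in> op_ideal S" "M \<in> op_ideal T"
  shows "M \<in> op_ideal S"
proof -
  obtain n R R' where 1: "\<forall>j<(n::nat). bop (R j) \<and> bop (R' j)" "M = (\<lambda>z. \<Sum>j<n. R j (T (R' j z)))"
    using assms(2) unfolding op_ideal_iff by blast
  have "(\<lambda>z. \<Sum>j\<in>{..<n}. R j (T (R' j z))) \<in> op_ideal S"
    by (rule op_ideal_sum) (use 1 assms(1) op_ideal_comp[of T S] in auto)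
  then show ?thesis using 1 by simp
qed




section \<open>Hahn-Banach (real, one vector)\<close>

definition hbgood :: "'a::real_normed_vector \<Rightarrow> ('a \<times> real) set \<Rightarrow> bool" where
  "hbgood v G \<longleftrightarrow> (\<forall>x a y b. (x,a)\<in>G \<longrightarrow> (y,b)\<in>G \<longrightarrow> (x+y, a+b) \<in> G)
     \<and> (\<forall>x a c. (x,a)\<in>G \<longrightarrow> (c *\<^sub>R x, c*a) \<in> G)
     \<and> (\<forall>a. (0,a)\<in>G \<longrightarrow> a = 0) \<and> (v, norm v) \<in> G
     \<and> (\<forall>x a. (x,a)\<in>G \<longrightarrow> a \<le> norm x)"

lemma hbgoodD:
  assumes "hbgood v G"
  shows "\<And>x a y b. (x,a)\<in>G \<Longrightarrow> (y,b)\<in>G \<Longrightarrow> (x+y, a+b) \<in> G"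
    and "\<And>x a c. (x,a)\<in>G \<Longrightarrow> (c *\<^sub>R x, c*a) \<in> G"
    and "\<And>a. (0,a)\<in>G \<Longrightarrow> a = 0" and "(v, norm v) \<in> G"
    and "\<And>x a. (x,a)\<in>G \<Longrightarrow> a \<le> norm x"
  using assms unfolding hbgood_def by blast+

lemma hbgood_base:
  assumes "v \<noteq> 0"
  shows "hbgood v {(t *\<^sub>R v, t * norm v) | t. True}"
  unfolding hbgood_def
proof (intro conjI allI impI)
  fix x a y b assume "(x,a) \<in> {(t *\<^sub>R v, t * norm v) | t. True}" "(y,b) \<in> {(t *\<^sub>R v, t * norm v) | t. True}"
  then obtain s t where "x = s *\<^sub>R v" "a = s * norm v" "y = t *\<^sub>R v" "b = t * norm v" by auto
  then show "(x+y, a+b) \<in> {(t *\<^sub>R v, t * norm v) | t. True}"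
    by (intro CollectI exI[of _ "s+t"]) (simp add: scaleR_left_distrib distrib_right)
next
  fix x a c assume "(x,a) \<in> {(t *\<^sub>R v, t * norm v) | t. True}"
  then obtain s where "x = s *\<^sub>R v" "a = s * norm v" by auto
  then show "(c *\<^sub>R x, c*a) \<in> {(t *\<^sub>R v, t * norm v) | t. True}"
    by (intro CollectI exI[of _ "c * s"]) simp
next
  fix a assume "(0,a) \<in> {(t *\<^sub>R v, t * norm v) | t. True}"
  then obtain s where "0 = s *\<^sub>R v" "a = s * norm v" by auto
  then show "a = 0" using assms by auto
next
  show "(v, norm v) \<in> {(t *\<^sub>R v, t * norm v) | t. True}"
    by (intro CollectI exI[of _ 1]) simp
next
  fix x a assume "(x,a) \<in> {(t *\<^sub>R v, t * norm v) | t. True}"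
  then obtain s where "x = s *\<^sub>R v" "a = s * norm v" by auto
  then show "a \<le> norm x" by (simp add: mult_right_mono)
qed

lemma hbgood_union:
  assumes "C \<noteq> {}" "\<forall>G\<in>C. hbgood v G" "chain\<^sub>\<subseteq> C"
  shows "hbgood v (\<Union>C)"
  unfolding hbgood_def
proof (intro conjI allI impI)
  fix x a y b assume "(x,a) \<in> \<Union>C" "(y,b) \<in> \<Union>C"
  then obtain G H where GH: "G \<in> C" "H \<in> C" "(x,a) \<in> G" "(y,b) \<in> H" by auto
  then have "G \<subseteq> H \<or> H \<subseteq> G" using assms(3) unfolding chain_subset_def by blast
  then show "(x+y, a+b) \<in> \<Union>C"
  proof
    assume "G \<subseteq> H" then show ?thesis using GH assms(2) hbgoodD(1)[of v H x a y b] by blast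
  next
    assume "H \<subseteq> G" then show ?thesis using GH assms(2) hbgoodD(1)[of v G x a y b] by blast
  qed
next
  fix x a c assume "(x,a) \<in> \<Union>C" then show "(c *\<^sub>R x, c*a) \<in> \<Union>C"
    using assms(2) hbgoodD(2) by blast
next
  fix a assume "(0,a) \<in> \<Union>C" then show "a = 0"
    using assms(2) hbgoodD(3) by blast
next
  show "(v, norm v) \<in> \<Union>C" using assms(1,2) hbgoodD(4) by blast
next
  fix x a assume "(x,a) \<in> \<Union>C" then show "a \<le> norm x"
    using assms(2) hbgoodD(5) by blast
qed

lemma hbgood_uniq:
  assumes "hbgood v G" "(x,a) \<in> G" "(x,b) \<in> G"
  shows "a = b"
proof -
  have "(x + (-1) *\<^sub>R x, a + (-1) * b) \<in> G" using hbgoodD(1,2)[OF assms(1)] assms(2,3) by blast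
  then have "(0, a - b) \<in> G" by simp
  then show ?thesis using hbgoodD(3)[OF assms(1)] by force
qed

lemma hbgood_extend:
  fixes x0 :: "'a::real_normed_vector"
  assumes G: "hbgood v G" and x0: "\<forall>a. (x0,a) \<notin> G"
  shows "\<exists>G'. hbgood v G' \<and> G \<subseteq> G' \<and> G' \<noteq> G"
proof -
  have add: "\<And>x a y b. (x,a)\<in>G \<Longrightarrow> (y,b)\<in>G \<Longrightarrow> (x+y, a+b) \<in> G"
    and scl: "\<And>x a c. (x,a)\<in>G \<Longrightarrow> (c *\<^sub>R x, c*a) \<in> G"
    and zer: "\<And>a. (0,a)\<in>G \<Longrightarrow> a = 0" and vin: "(v, norm v) \<in> G"
    and dom: "\<And>x a. (x,a)\<in>G \<Longrightarrow> a \<le> norm x"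
    using hbgoodD[OF G] by blast+
  have z: "(0,0) \<in> G" using scl[OF vin, of 0] by simp
  define Sset where "Sset = {b - norm (y - x0) | y b. (y,b) \<in> G}"
  have key: "b - norm (y - x0) \<le> norm (z + x0) - d" if "(y,b)\<in>G" "(z,d)\<in>G" for y b z d
  proof -
    have "b + d \<le> norm (y + z)" using dom[OF add[OF that]] .
    also have "\<dots> = norm ((y - x0) + (z + x0))" by simp
    also have "\<dots> \<le> norm (y - x0) + norm (z + x0)" by (rule norm_triangle_ineq)
    finally show ?thesis by simp
  qed
  have ne: "Sset \<noteq> {}" using z unfolding Sset_def by blast
  have bdd: "bdd_above Sset"
    unfolding bdd_above_def Sset_def using key[OF _ z] by auto
  define c where "c = Sup Sset"
  have c1: "b - norm (y - x0) \<le> c" if "(y,b)\<in>G" for y b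
    unfolding c_def by (rule cSup_upper[OF _ bdd]) (use that in \<open>auto simp: Sset_def\<close>)
  have c2: "c \<le> norm (z + x0) - d" if "(z,d)\<in>G" for z d
    unfolding c_def by (rule cSup_least[OF ne]) (use key that in \<open>auto simp: Sset_def\<close>)
  define G' where "G' = {(y + t *\<^sub>R x0, b + t * c) | y b t. (y,b) \<in> G}"
  have "hbgood v G'"
    unfolding hbgood_def
  proof (intro conjI allI impI)
    fix x a y b assume "(x,a) \<in> G'" "(y,b) \<in> G'"
    then obtain x1 a1 s y1 b1 t where "x = x1 + s *\<^sub>R x0" "a = a1 + s * c" "(x1,a1)\<in>G"
      "y = y1 + t *\<^sub>R x0" "b = b1 + t * c" "(y1,b1)\<in>G" unfolding G'_def by blast
    then show "(x+y, a+b) \<in> G'" unfolding G'_def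
      by (intro CollectI exI[of _ "x1+y1"] exI[of _ "a1+b1"] exI[of _ "s+t"])
        (auto simp: add algebra_simps)
  next
    fix x a r assume "(x,a) \<in> G'"
    then obtain x1 a1 s where "x = x1 + s *\<^sub>R x0" "a = a1 + s * c" "(x1,a1)\<in>G" unfolding G'_def by blast
    moreover have "(r *\<^sub>R x1, r * a1) \<in> G" using scl calculation(3) by blast
    moreover have "r *\<^sub>R x = r *\<^sub>R x1 + (r * s) *\<^sub>R x0" "r * a = r * a1 + (r * s) * c"
      using calculation(1,2) by (simp_all add: algebra_simps)
    ultimately show "(r *\<^sub>R x, r*a) \<in> G'" unfolding G'_def by blast
  next
    fix a assume "(0,a) \<in> G'"
    then obtain x1 a1 s where e: "0 = x1 + s *\<^sub>R x0" "a = a1 + s * c" "(x1,a1)\<in>G" unfolding G'_def by blast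
    show "a = 0"
    proof (cases "s = 0")
      case True then show ?thesis using e zer by auto
    next
      case False
      have "x0 = (- inverse s) *\<^sub>R x1" using e(1) False
        by (simp add: eq_neg_iff_add_eq_0[symmetric] add.commute) 
      then have "(x0, (- inverse s) * a1) \<in> G" using scl[OF e(3), of "- inverse s"] by simp
      then show ?thesis using x0 by blast
    qed
  next
    show "(v, norm v) \<in> G'" unfolding G'_def
      by (intro CollectI exI[of _ v] exI[of _ "norm v"] exI[of _ 0]) (simp add: vin)
  next
    fix x a assume "(x,a) \<in> G'"
    then obtain y b t where e: "x = y + t *\<^sub>R x0" "a = b + t * c" "(y,b)\<in>G" unfolding G'_def by blast
    show "a \<le> norm x"
    proof (cases t "0::real" rule: linorder_cases)
      case equal then show ?thesis using e dom by simp
    next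
      case greater
      have "(inverse t *\<^sub>R y, inverse t * b) \<in> G" using scl[OF e(3)] .
      from c2[OF this] have "c \<le> norm (inverse t *\<^sub>R y + x0) - inverse t * b" .
      also have "inverse t *\<^sub>R y + x0 = inverse t *\<^sub>R (y + t *\<^sub>R x0)" using greater
        by (simp add: scaleR_add_right)
      finally have "t * c \<le> t * (norm (inverse t *\<^sub>R (y + t *\<^sub>R x0)) - inverse t * b)"
        using greater by (simp add: mult_left_mono)
      also have "\<dots> = norm (y + t *\<^sub>R x0) - b" using greater
        by (simp add: right_diff_distrib mult.assoc[symmetric])
      finally show ?thesis using e by simp
    next
      case less
      define s where "s = - t"
      have s: "s > 0" using less s_def by simp
      have "(inverse s *\<^sub>R y, inverse s * b) \<in> G" using scl[OF e(3)] .
      from c1[OF this] have "inverse s * b - norm (inverse s *\<^sub>R y - x0) \<le> c" .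
      also have "inverse s *\<^sub>R y - x0 = inverse s *\<^sub>R (y + t *\<^sub>R x0)" using s
        by (simp add: s_def scaleR_add_right)
      finally have "s * (inverse s * b - norm (inverse s *\<^sub>R (y + t *\<^sub>R x0))) \<le> s * c"
        using s by (simp add: mult_left_mono)
      then have "b - norm (y + t *\<^sub>R x0) \<le> s * c" using s by (simp add: right_diff_distrib mult.assoc[symmetric])
      then show ?thesis using e s_def by simp
    qed
  qed
  moreover have "G \<subseteq> G'"
  proof
    fix p assume "p \<in> G" then show "p \<in> G'" unfolding G'_def
      by (intro CollectI exI[of _ "fst p"] exI[of _ "snd p"] exI[of _ 0]) simp
  qed
  moreover have "(x0, c) \<in> G'" unfolding G'_def
    by (intro CollectI exI[of _ 0] exI[of _ 0] exI[of _ 1]) (simp add: z)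
  then have "G' \<noteq> G" using x0 by blast
  ultimately show ?thesis by blast
qed




lemma hahn_banach_real:
  fixes v :: "'a::real_normed_vector"
  assumes "v \<noteq> 0"
  shows "\<exists>f. bounded_linear f \<and> (\<forall>x. \<bar>f x\<bar> \<le> norm x) \<and> f v = norm v"
proof -
  define A where "A = {G. hbgood v G}"
  have "\<exists>M\<in>A. \<forall>X\<in>A. M \<subseteq> X \<longrightarrow> X = M"
  proof (rule Zorn_Lemma2, intro ballI)
    fix C assume C: "C \<in> chains A"
    show "\<exists>U\<in>A. \<forall>X\<in>C. X \<subseteq> U"
    proof (cases "C = {}")
      case True then show ?thesis using hbgood_base[OF assms] unfolding A_def by blast
    next
      case False
      have "hbgood v (\<Union>C)" using hbgood_union[OF False] C unfolding chains_def A_def by blast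
      then show ?thesis unfolding A_def by blast
    qed
  qed
  then obtain M where M: "hbgood v M" and max: "\<And>X. hbgood v X \<Longrightarrow> M \<subseteq> X \<Longrightarrow> X = M"
    unfolding A_def by blast
  have tot: "\<exists>a. (x,a) \<in> M" for x
  proof (rule ccontr)
    assume "\<nexists>a. (x, a) \<in> M"
    then obtain G' where "hbgood v G'" "M \<subseteq> G'" "G' \<noteq> M" using hbgood_extend[OF M] by blast
    then show False using max by blast
  qed
  define f where "f x = (THE a. (x,a) \<in> M)" for x
  have fM: "(x, f x) \<in> M" for x
    unfolding f_def using tot[of x] hbgood_uniq[OF M] by (metis theI)
  have fe: "(x,a) \<in> M \<Longrightarrow> f x = a" for x a using hbgood_uniq[OF M fM] by blast
  have add: "\<And>x a y b. (x,a)\<in>M \<Longrightarrow> (y,b)\<in>M \<Longrightarrow> (x+y, a+b) \<in> M"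
    and scl: "\<And>x a c. (x,a)\<in>M \<Longrightarrow> (c *\<^sub>R x, c*a) \<in> M"
    and vin: "(v, norm v) \<in> M"
    and dom: "\<And>x a. (x,a)\<in>M \<Longrightarrow> a \<le> norm x"
    using hbgoodD[OF M] by blast+
  have fadd: "f (x + y) = f x + f y" for x y using fe[OF add[OF fM fM]] .
  have fscl: "f (c *\<^sub>R x) = c * f x" for c x using fe[OF scl[OF fM]] .
  have fb: "\<bar>f x\<bar> \<le> norm x" for x
  proof -
    have "f x \<le> norm x" using dom[OF fM] .
    moreover have "- f x \<le> norm x" using dom[OF fM, of "(-1) *\<^sub>R x"] fscl[of "-1" x] by simp
    ultimately show ?thesis by simp
  qed
  have "bounded_linear f"
    by (rule bounded_linear_intro[where K=1]) (use fadd fscl fb in auto)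
  moreover have "f v = norm v" using fe[OF vin] .
  ultimately show ?thesis using fb by blast
qed




section \<open>Complex functionals\<close>

definition cfun :: "('a::complex_banach \<Rightarrow> complex) \<Rightarrow> bool" where
  "cfun \<phi> \<longleftrightarrow> bounded_linear \<phi> \<and> (\<forall>c x. \<phi> (cscale c x) = c * \<phi> x)"

lemma cscale_decomp: "cscale c (y::'a::complex_banach) = Re c *\<^sub>R y + Im c *\<^sub>R cscale \<i> y"
proof -
  have "c = complex_of_real (Re c) + complex_of_real (Im c) * \<i>" by (simp add: complex_eq_iff)
  then have "cscale c y = cscale (complex_of_real (Re c) + complex_of_real (Im c) * \<i>) y" by simp
  also have "\<dots> = Re c *\<^sub>R y + Im c *\<^sub>R cscale \<i> y"
    by (simp only: cscale_add_left cscale_real_mult cscale_of_real)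
  finally show ?thesis .
qed

lemma cscale_comm: "cscale a (cscale b (x::'a::complex_banach)) = cscale b (cscale a x)"
  by (simp only: cscale_assoc mult.commute)

lemma cscale_scaleR: "cscale a (r *\<^sub>R (x::'a::complex_banach)) = r *\<^sub>R cscale a x"
proof -
  have "cscale a (r *\<^sub>R x) = cscale a (cscale (complex_of_real r) x)" by (simp only: cscale_of_real)
  also have "\<dots> = cscale (complex_of_real r) (cscale a x)" by (rule cscale_comm)
  also have "\<dots> = r *\<^sub>R cscale a x" by (simp only: cscale_of_real)
  finally show ?thesis .
qed

lemma cscale_ii: "cscale \<i> (cscale \<i> y) = - (y::'a::complex_banach)"
proof -
  have "cscale \<i> (cscale \<i> y) = cscale (complex_of_real (-1)) y" by (simp only: cscale_assoc) simp
  also have "\<dots> = - y" by (simp only: cscale_of_real) simp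
  finally show ?thesis .
qed

lemma complexify:
  fixes f :: "'a::complex_banach \<Rightarrow> real"
  assumes f: "bounded_linear f"
  shows "cfun (\<lambda>y. Complex (f y) (- f (cscale \<i> y)))"
proof -
  interpret f: bounded_linear f by fact
  have ci: "bounded_linear (\<lambda>y. cscale \<i> (y::'a))"
    by (rule bounded_linear_intro[where K=1]) (auto simp: cscale_add_right norm_cscale cscale_scaleR)
  interpret ci: bounded_linear "\<lambda>y. cscale \<i> (y::'a)" by fact
  have bl: "bounded_linear (\<lambda>y. Complex (f y) (- f (cscale \<i> y)))"
  proof -
    have b1: "bounded_linear (\<lambda>y. complex_of_real (- f (cscale \<i> y)))"
      by (intro bounded_linear_compose[OF bounded_linear_of_real] bounded_linear_minus bounded_linear_compose[OF f ci])
    have "bounded_linear (\<lambda>y. complex_of_real (f y) + \<i> * complex_of_real (- f (cscale \<i> y)))"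
      by (intro bounded_linear_add bounded_linear_compose[OF bounded_linear_mult_right b1]
          bounded_linear_compose[OF bounded_linear_of_real f])
    then show ?thesis by (simp add: complex_eq_iff[abs_def] Complex_eq)
  qed
  show ?thesis unfolding cfun_def
  proof (intro conjI allI bl)
    fix c y
    have e1: "f (cscale c y) = Re c * f y + Im c * f (cscale \<i> y)"
      by (simp add: cscale_decomp[of c y] f.add f.scaleR)
    have e2: "f (cscale \<i> (cscale c y)) = Re c * f (cscale \<i> y) - Im c * f y"
    proof -
      have "cscale \<i> (cscale c y) = cscale c (cscale \<i> y)" by (rule cscale_comm)
      also have "\<dots> = Re c *\<^sub>R cscale \<i> y + Im c *\<^sub>R (- y)"
        by (subst cscale_decomp) (simp only: cscale_ii)
      finally show ?thesis by (simp add: f.add f.diff f.scaleR f.neg)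
    qed
    show "Complex (f (cscale c y)) (- f (cscale \<i> (cscale c y))) = c * Complex (f y) (- f (cscale \<i> y))"
      by (simp add: complex_eq_iff e1 e2 algebra_simps)
  qed
qed

lemma hahn_banach_complex:
  fixes v :: "'a::complex_banach"
  assumes "v \<noteq> 0"
  shows "\<exists>\<psi>. cfun \<psi> \<and> \<psi> v = 1"
proof -
  obtain f where f: "bounded_linear f" "f v = norm v" using hahn_banach_real[OF assms] by blast
  define \<psi> where "\<psi> y = Complex (f y) (- f (cscale \<i> y))" for y
  have c: "cfun \<psi>" unfolding \<psi>_def by (rule complexify[OF f(1)])
  have nz: "\<psi> v \<noteq> 0" using f(2) assms by (simp add: \<psi>_def complex_eq_iff)
  define g where "g y = \<psi> y / \<psi> v" for y
  have "cfun g" using c unfolding cfun_def g_def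
    by (auto intro: bounded_linear_compose[OF bounded_linear_divide])
  moreover have "g v = 1" using nz by (simp add: g_def)
  ultimately show ?thesis by blast
qed

lemma bop_rank1:
  assumes "cfun \<phi>"
  shows "bop (\<lambda>z. cscale (\<phi> z) (w::'b::complex_banach))"
proof -
  interpret p: bounded_linear \<phi> using assms cfun_def by blast
  obtain K where K: "\<And>x. norm (\<phi> x) \<le> norm x * K" using p.bounded by blast
  have bl: "bounded_linear (\<lambda>z. cscale (\<phi> z) w)"
  proof (rule bounded_linear_intro[where K="K * norm w"])
    fix x y show "cscale (\<phi> (x + y)) w = cscale (\<phi> x) w + cscale (\<phi> y) w"
      by (simp add: p.add cscale_add_left)
  next
    fix r x show "cscale (\<phi> (r *\<^sub>R x)) w = r *\<^sub>R cscale (\<phi> x) w"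
      by (simp add: p.scaleR scaleR_conv_of_real cscale_real_mult)
  next
    fix x show "norm (cscale (\<phi> x) w) \<le> norm x * (K * norm w)"
      using K[of x] by (simp add: norm_cscale mult_right_mono mult.assoc[symmetric])
  qed
  show ?thesis
    by (rule bopI[OF bl]) (use assms in \<open>simp add: cfun_def cscale_assoc\<close>)
qed

lemma cfun_comp: "cfun \<phi> \<Longrightarrow> bop A \<Longrightarrow> cfun (\<lambda>x. \<phi> (A x))"
  by (auto simp: cfun_def bop_def intro: bounded_linear_compose)

lemma rank1_in_ideal:
  fixes S :: "'y::complex_banach \<Rightarrow> 'y" and w :: "'z2::complex_banach"
  assumes S: "bop S" "S \<noteq> (\<lambda>y. 0)" and \<phi>: "cfun (\<phi> :: 'z1::complex_banach \<Rightarrow> complex)"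
  shows "(\<lambda>z. cscale (\<phi> z) w) \<in> op_ideal S"
proof -
  obtain y0 where y0: "S y0 \<noteq> 0" using S(2) by auto
  obtain \<psi> where \<psi>: "cfun \<psi>" "\<psi> (S y0) = 1" using hahn_banach_complex[OF y0] by blast
  have "(\<lambda>z. (\<lambda>y. cscale (\<psi> y) w) (S ((\<lambda>z. cscale (\<phi> z) y0) z))) \<in> op_ideal S"
    by (rule op_ideal_single) (auto intro: bop_rank1 \<psi> \<phi>)
  moreover have "(\<lambda>z. (\<lambda>y. cscale (\<psi> y) w) (S ((\<lambda>z. cscale (\<phi> z) y0) z))) = (\<lambda>z. cscale (\<phi> z) w)"
    using \<psi> S(1) by (simp add: bop_cs cfun_def)
  ultimately show ?thesis by simp
qed




lemma coord_bound:
  fixes b y :: "'a::real_normed_vector"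
  assumes V: "subspace V" and y: "y - k *\<^sub>R b \<in> V"
  shows "\<bar>k\<bar> * infdist b V \<le> norm y"
proof (cases "k = 0")
  case True then show ?thesis by simp
next
  case False
  have "(- inverse k) *\<^sub>R (y - k *\<^sub>R b) \<in> V" by (rule subspace_scale[OF V y])
  moreover have "(- inverse k) *\<^sub>R (y - k *\<^sub>R b) = b - inverse k *\<^sub>R y"
    using False by (simp add: algebra_simps)
  ultimately have "infdist b V \<le> dist b (b - inverse k *\<^sub>R y)" by (metis infdist_le)
  also have "\<dots> = norm y / \<bar>k\<bar>" by (simp add: dist_norm divide_inverse abs_inverse mult.commute)
  finally show ?thesis using False by (simp add: field_simps)
qed

lemma closed_span_finite:
  fixes E :: "'a::real_normed_vector set"
  assumes "finite E"
  shows "closed (span E)"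
  using assms
proof (induction E rule: finite_induct)
  case empty then show ?case by simp
next
  case (insert b E)
  show ?case
  proof (cases "b \<in> span E")
    case True then show ?thesis using insert by (simp add: span_redundant)
  next
    case False
    define d where "d = infdist b (span E)"
    have d: "d > 0" unfolding d_def
      by (rule infdist_pos_not_in_closed) (use insert False span_zero in auto)
    show ?thesis unfolding closed_sequential_limits
    proof (intro allI impI, elim conjE)
      fix x l assume xs: "\<forall>n. x n \<in> span (insert b E)" and xl: "x \<longlonglongrightarrow> l"
      have "\<forall>n. \<exists>k. x n - k *\<^sub>R b \<in> span E"
        using xs unfolding span_insert by blast
      then obtain k where k: "\<And>n. x n - k n *\<^sub>R b \<in> span E"
        using choice[of "\<lambda>n k. x n - k *\<^sub>R b \<in> span E"] by blast
      have kb: "\<bar>k m - k n\<bar> * d \<le> norm (x m - x n)" for m n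
      proof -
        have "(x m - k m *\<^sub>R b) - (x n - k n *\<^sub>R b) \<in> span E" using k span_diff by blast
        then have "(x m - x n) - (k m - k n) *\<^sub>R b \<in> span E" by (simp add: algebra_simps)
        then show ?thesis unfolding d_def by (rule coord_bound[OF subspace_span])
      qed
      have "Cauchy x" using xl by (rule LIMSEQ_imp_Cauchy)
      have "Cauchy k"
      proof (rule CauchyI)
        fix e :: real assume e: "e > 0"
        obtain M where M: "\<forall>m\<ge>M. \<forall>n\<ge>M. norm (x m - x n) < e * d"
          using CauchyD[OF \<open>Cauchy x\<close>, of "e * d"] e d by auto
        show "\<exists>M. \<forall>m\<ge>M. \<forall>n\<ge>M. norm (k m - k n) < e"
        proof (intro exI allI impI)
          fix m n assume "M \<le> m" "M \<le> n"
          then have "\<bar>k m - k n\<bar> * d < e * d" using kb[of m n] M by fastforce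
          then show "norm (k m - k n) < e" using d by simp
        qed
      qed
      then obtain k0 where k0: "k \<longlonglongrightarrow> k0" using Cauchy_convergent_iff convergent_def by blast
      have "(\<lambda>n. x n - k n *\<^sub>R b) \<longlonglongrightarrow> l - k0 *\<^sub>R b"
        by (intro tendsto_intros xl k0)
      then have "l - k0 *\<^sub>R b \<in> span E"
        using insert(3)[unfolded closed_sequential_limits, rule_format, of "\<lambda>n. x n - k n *\<^sub>R b"] k by blast
      then show "l \<in> span (insert b E)" unfolding span_insert by blast
    qed
  qed
qed

lemma representation_bound:
  fixes E :: "'a::real_normed_vector set"
  assumes "finite E" "independent E" "e \<in> E"
  shows "\<exists>K. \<forall>x\<in>span E. \<bar>representation E x e\<bar> \<le> K * norm x"
proof -
  define V where "V = span (E - {e})"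
  have eV: "e \<notin> V" using assms(2,3) unfolding V_def dependent_def by blast
  have d: "infdist e V > 0" unfolding V_def
    by (rule infdist_pos_not_in_closed) (use assms(1) closed_span_finite[of "E - {e}"] eV V_def span_zero in auto)
  show ?thesis
  proof (intro exI ballI)
    fix x assume x: "x \<in> span E"
    have "x = (\<Sum>b\<in>E. representation E x b *\<^sub>R b)"
      using sum_representation_eq[OF assms(2) x assms(1)] by simp
    also have "\<dots> = representation E x e *\<^sub>R e + (\<Sum>b\<in>E - {e}. representation E x b *\<^sub>R b)"
      using assms(1,3) by (simp add: sum.remove)
    finally have "x - representation E x e *\<^sub>R e = (\<Sum>b\<in>E - {e}. representation E x b *\<^sub>R b)"
      by (simp add: algebra_simps)
    moreover have "(\<Sum>b\<in>E - {e}. representation E x b *\<^sub>R b) \<in> V" unfolding V_def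
      by (intro span_sum span_scale span_base) auto
    ultimately have "x - representation E x e *\<^sub>R e \<in> V" by simp
    then have "\<bar>representation E x e\<bar> * infdist e V \<le> norm x"
      by (rule coord_bound[OF subspace_span[of "E - {e}", folded V_def]])
    then show "\<bar>representation E x e\<bar> \<le> inverse (infdist e V) * norm x"
      using d by (simp add: field_simps)
  qed
qed

lemma finite_rank_in_ideal:
  fixes S :: "'y::complex_banach \<Rightarrow> 'y" and Q :: "'a::complex_banach \<Rightarrow> 'a"
    and T :: "'a \<Rightarrow> 'z2::complex_banach" and A :: "'z1::complex_banach \<Rightarrow> 'a"
  assumes S: "bop S" "S \<noteq> (\<lambda>y. 0)" and Q: "bop Q" and T: "bop T" and A: "bop A"
    and E: "finite E" "independent E" and QE: "\<And>x. Q x \<in> span E"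
  shows "(\<lambda>z. T (Q (A z))) \<in> op_ideal S"
proof -
  interpret Q: bounded_linear Q using Q bop_bl by blast
  obtain KQ where KQ: "\<And>x. norm (Q x) \<le> norm x * KQ" using Q.bounded by blast
  define r where "r e x = representation E (Q x) e" for e x
  have rbl: "bounded_linear (r e)" if e: "e \<in> E" for e
  proof -
    obtain K where K: "\<forall>x\<in>span E. \<bar>representation E x e\<bar> \<le> K * norm x"
      using representation_bound[OF E e] by blast
    show ?thesis
    proof (rule bounded_linear_intro[where K="K * KQ"])
      fix x y show "r e (x + y) = r e x + r e y"
        by (simp add: r_def Q.add representation_add[OF E(2) QE QE])
    next
      fix c x show "r e (c *\<^sub>R x) = c *\<^sub>R r e x"
        by (simp add: r_def Q.scaleR representation_scale[OF E(2) QE])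
    next
      fix x
      have K0: "K \<ge> 0"
      proof -
        have "representation E e e = 1" using representation_basis[OF E(2) e] by simp
        then have "1 \<le> K * norm e" using K span_base[OF e] by fastforce
        show ?thesis
        proof (rule ccontr)
          assume "\<not> K \<ge> 0"
          then have "K * norm e \<le> 0" by (simp add: mult_nonpos_nonneg)
          then show False using \<open>1 \<le> K * norm e\<close> by simp
        qed
      qed
      have "\<bar>r e x\<bar> \<le> K * norm (Q x)" using K QE unfolding r_def by blast
      also have "\<dots> \<le> K * (norm x * KQ)" using KQ K0 by (simp add: mult_left_mono)
      finally show "norm (r e x) \<le> norm x * (K * KQ)" by (simp add: ac_simps)
    qed
  qed
  define \<phi> where "\<phi> e x = Complex (r e x) (- r e (cscale \<i> x))" for e x
  have cf: "cfun (\<phi> e)" if "e \<in> E" for e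
    unfolding \<phi>_def[abs_def] by (rule complexify[OF rbl[OF that]])
  have Qrep: "Q x = (\<Sum>e\<in>E. r e x *\<^sub>R e)" for x
    using sum_representation_eq[OF E(2) QE E(1)] by (simp add: r_def)
  have Qx: "Q x = (\<Sum>e\<in>E. cscale (\<phi> e x / 2) e)" for x
  proof -
    have "(\<Sum>e\<in>E. cscale (\<phi> e x) e) = (\<Sum>e\<in>E. r e x *\<^sub>R e - cscale \<i> (r e (cscale \<i> x) *\<^sub>R e))"
    proof (rule sum.cong[OF refl])
      fix e
      have "cscale (\<phi> e x) e = r e x *\<^sub>R e + (- r e (cscale \<i> x)) *\<^sub>R cscale \<i> e"
        by (simp add: \<phi>_def cscale_decomp[of "Complex _ _"])
      then show "cscale (\<phi> e x) e = r e x *\<^sub>R e - cscale \<i> (r e (cscale \<i> x) *\<^sub>R e)"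
        by (simp add: cscale_scaleR)
    qed
    also have "\<dots> = Q x - cscale \<i> (Q (cscale \<i> x))"
      by (simp add: sum_subtractf Qrep cscale_sum_right)
    also have "\<dots> = 2 *\<^sub>R Q x"
      using Q by (simp add: bop_cs cscale_ii scaleR_2)
    finally have "(\<Sum>e\<in>E. cscale (\<phi> e x) e) = 2 *\<^sub>R Q x" .
    moreover have "(\<Sum>e\<in>E. cscale (\<phi> e x / 2) e) = (1/2) *\<^sub>R (\<Sum>e\<in>E. cscale (\<phi> e x) e)"
    proof -
      have "cscale (\<phi> e x / 2) e = (1/2) *\<^sub>R cscale (\<phi> e x) e" for e
        using cscale_real_mult[of "1/2" "\<phi> e x" e] by (simp add: mult.commute)
      then show ?thesis by (simp add: scaleR_sum_right)
    qed
    ultimately show ?thesis by simp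
  qed
  have lin: "linear T" using T bop_bl bounded_linear.linear by blast
  have "T (Q (A z)) = (\<Sum>e\<in>E. cscale (\<phi> e (A z) / 2) (T e))" for z
    using T by (simp add: Qx linear_sum[OF lin] bop_cs)
  moreover have "(\<lambda>z. \<Sum>e\<in>E. cscale (\<phi> e (A z) / 2) (T e)) \<in> op_ideal S"
  proof (rule op_ideal_sum)
    fix e assume e: "e \<in> E"
    have "cfun (\<lambda>z. \<phi> e (A z) / 2)"
      using cfun_comp[OF cf[OF e] A] unfolding cfun_def
      by (auto intro: bounded_linear_compose[OF bounded_linear_divide])
    then show "(\<lambda>z. cscale (\<phi> e (A z) / 2) (T e)) \<in> op_ideal S"
      by (rule rank1_in_ideal[OF S])
  qed
  ultimately show ?thesis by simp
qed




definition cop :: "('a::real_normed_vector \<Rightarrow> 'a) \<Rightarrow> bool" where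
  "cop C \<longleftrightarrow> bounded_linear C \<and>
     (\<forall>x::nat \<Rightarrow> 'a. bounded (range x) \<longrightarrow> (\<exists>r. strict_mono r \<and> convergent (\<lambda>n. C (x (r n)))))"

lemma copD: "cop C \<Longrightarrow> bounded (range (x::nat \<Rightarrow> 'a::real_normed_vector)) \<Longrightarrow> \<exists>r. strict_mono r \<and> convergent (\<lambda>n. C (x (r n)))"
  unfolding cop_def by blast

lemma cop_bl: "cop C \<Longrightarrow> bounded_linear C" unfolding cop_def by blast

lemma cop_zero: "cop (\<lambda>x. 0)"
  unfolding cop_def by (auto intro!: exI[of _ id] simp: strict_mono_def convergent_const bounded_linear_zero)

lemma bounded_range_bl:
  assumes "bounded_linear A" "bounded (range x)"
  shows "bounded (range (\<lambda>n. A (x n)))"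
proof -
  interpret A: bounded_linear A by fact
  obtain K where K: "\<And>y. norm (A y) \<le> norm y * K" "K > 0" using A.pos_bounded by blast
  obtain b where b: "\<And>n. norm (x n) \<le> b" using assms(2) unfolding bounded_iff by blast
  have "norm (A (x n)) \<le> b * K" for n using K(1)[of "x n"] b[of n] K(2)
    by (meson mult_right_mono order_trans less_imp_le)
  then show ?thesis unfolding bounded_iff by blast
qed

lemma cop_comp_right: "cop C \<Longrightarrow> bounded_linear A \<Longrightarrow> cop (\<lambda>x. C (A x))"
  unfolding cop_def using bounded_range_bl bounded_linear_compose by blast

lemma cop_comp_left:
  assumes "cop C" "bounded_linear A"
  shows "cop (\<lambda>x. A (C x))"
  unfolding cop_def
proof (intro conjI allI impI)
  show "bounded_linear (\<lambda>x. A (C x))" using assms cop_bl bounded_linear_compose by blast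
  fix x :: "nat \<Rightarrow> 'a" assume "bounded (range x)"
  then obtain r where r: "strict_mono r" "convergent (\<lambda>n. C (x (r n)))" using copD[OF assms(1)] by blast
  then obtain l where "(\<lambda>n. C (x (r n))) \<longlonglongrightarrow> l" unfolding convergent_def by blast
  then have "(\<lambda>n. A (C (x (r n)))) \<longlonglongrightarrow> A l" using bounded_linear.tendsto[OF assms(2)] by blast
  then show "\<exists>r. strict_mono r \<and> convergent (\<lambda>n. A (C (x (r n))))" using r(1) unfolding convergent_def by blast
qed

lemma cop_add:
  assumes "cop C1" "cop C2"
  shows "cop (\<lambda>x. C1 x + C2 x)"
  unfolding cop_def
proof (intro conjI allI impI)
  show "bounded_linear (\<lambda>x. C1 x + C2 x)" using assms cop_bl bounded_linear_add by blast
  fix x :: "nat \<Rightarrow> 'a" assume b: "bounded (range x)"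
  then obtain r1 where r1: "strict_mono r1" "convergent (\<lambda>n. C1 (x (r1 n)))" using copD[OF assms(1)] by blast
  have "bounded (range (\<lambda>n. x (r1 n)))" using b by (rule bounded_subset) auto
  then obtain r2 where r2: "strict_mono r2" "convergent (\<lambda>n. C2 (x (r1 (r2 n))))" using copD[OF assms(2)] by blast
  have "convergent ((\<lambda>n. C1 (x (r1 n))) \<circ> r2)" by (rule convergent_subseq_convergent[OF r1(2) r2(1)])
  then have "convergent (\<lambda>n. C1 (x (r1 (r2 n))) + C2 (x (r1 (r2 n))))"
    using r2(2) by (simp add: o_def convergent_add)
  moreover have "strict_mono (r1 \<circ> r2)" using r1(1) r2(1) by (rule strict_mono_o)
  ultimately show "\<exists>r. strict_mono r \<and> convergent (\<lambda>n. C1 (x (r n)) + C2 (x (r n)))"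
    by (intro exI[of _ "r1 \<circ> r2"]) simp
qed

lemma cop_diff:
  assumes "cop C1" "cop C2"
  shows "cop (\<lambda>x. C1 x - C2 x)"
proof -
  have "cop (\<lambda>x. - C2 x)" using cop_comp_left[OF assms(2) bounded_linear_minus[OF bounded_linear_ident]] by simp
  from cop_add[OF assms(1) this] show ?thesis by simp
qed

lemma cop_pow:
  assumes "cop C"
  shows "\<exists>D. cop D \<and> ((\<lambda>x. x - C x) ^^ n) = (\<lambda>x. x - D x)"
proof (induction n)
  case 0 then show ?case using cop_zero by (intro exI[of _ "\<lambda>x. 0"]) auto
next
  case (Suc n)
  then obtain D where D: "cop D" "((\<lambda>x. x - C x) ^^ n) = (\<lambda>x. x - D x)" by blast
  interpret C: bounded_linear C using assms cop_bl by blast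
  define D' where "D' x = (D x + C x) - C (D x)" for x
  have "cop D'" unfolding D'_def[abs_def]
    by (intro cop_diff cop_add D(1) assms cop_comp_left[OF D(1) cop_bl[OF assms]])
  moreover have "((\<lambda>x. x - C x) ^^ Suc n) = (\<lambda>x. x - D' x)"
    by (rule ext) (simp add: D(2) D'_def C.diff algebra_simps)
  ultimately show ?case by blast
qed

lemma infdist_near:
  fixes A :: "'a::metric_space set"
  assumes "A \<noteq> {}" "infdist x A < e"
  shows "\<exists>a\<in>A. dist x a < e"
proof -
  have bdd: "bdd_below ((\<lambda>a. dist x a) ` A)" by (rule bdd_belowI[of _ 0]) auto
  have "(INF a\<in>A. dist x a) < e" using assms infdist_notempty[OF assms(1), of x] by simp
  then show ?thesis by (simp add: cINF_less_iff[OF assms(1) bdd])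
qed

lemma riesz_lemma:
  fixes V W :: "'a::real_normed_vector set"
  assumes V: "subspace V" and W: "subspace W" "closed W" and WV: "W \<subseteq> V" "W \<noteq> V"
  shows "\<exists>x\<in>V. norm x = 1 \<and> (\<forall>w\<in>W. 1/2 \<le> norm (x - w))"
proof -
  obtain v where v: "v \<in> V" "v \<notin> W" using WV by blast
  have Wne: "W \<noteq> {}" using W subspace_0 by blast
  define d where "d = infdist v W"
  have d: "d > 0" unfolding d_def using infdist_pos_not_in_closed[OF W(2) Wne v(2)] .
  obtain w0 where w0: "w0 \<in> W" "dist v w0 < 2 * d" using infdist_near[OF Wne, of v "2*d"] d d_def by auto
  have dl: "d \<le> dist v w" if "w \<in> W" for w unfolding d_def using infdist_le[OF that] .
  define c where "c = norm (v - w0)"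
  have c: "c \<ge> d" "c < 2 * d" using dl[OF w0(1)] w0(2) by (simp_all add: c_def dist_norm)
  have cpos: "c > 0" using c d by simp
  define x where "x = (1/c) *\<^sub>R (v - w0)"
  have "x \<in> V" unfolding x_def using V v(1) WV(1) w0(1) by (intro subspace_scale subspace_diff) auto
  moreover have "norm x = 1" using cpos by (simp add: x_def c_def)
  moreover have "1/2 \<le> norm (x - w)" if w: "w \<in> W" for w
  proof -
    have "w0 + c *\<^sub>R w \<in> W" using W(1) w0(1) w by (intro subspace_add subspace_scale) auto
    then have "d \<le> norm (v - (w0 + c *\<^sub>R w))" using dl by (simp add: dist_norm)
    also have "v - (w0 + c *\<^sub>R w) = c *\<^sub>R (x - w)" using cpos by (simp add: x_def algebra_simps)
    finally have "d \<le> c * norm (x - w)" using cpos by simp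
    then have "d \<le> 2 * d * norm (x - w)"
      using c(2) by (meson less_imp_le mult_right_mono norm_ge_zero order_trans)
    then show ?thesis using d by (simp add: field_simps)
  qed
  ultimately show ?thesis by blast
qed

lemma cop_sep:
  fixes x :: "nat \<Rightarrow> 'a::real_normed_vector"
  assumes "cop C" "\<And>n. norm (x n) \<le> 1"
  shows "\<exists>m n. m < n \<and> norm (C (x n) - C (x m)) < 1/2"
proof -
  have "bounded (range x)" unfolding bounded_iff using assms(2) by blast
  then obtain r where r: "strict_mono r" "convergent (\<lambda>n. C (x (r n)))" using copD[OF assms(1)] by blast
  then have "Cauchy (\<lambda>n. C (x (r n)))" using convergent_Cauchy by blast
  then obtain M where M: "\<forall>m\<ge>M. \<forall>n\<ge>M. norm (C (x (r m)) - C (x (r n))) < 1/2"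
    using CauchyD[of _ "1/2"] by fastforce
  have "norm (C (x (r (Suc M))) - C (x (r M))) < 1/2" using M by auto
  moreover have "r M < r (Suc M)" using r(1) by (simp add: strict_mono_def)
  ultimately show ?thesis by blast
qed

lemma cop_bounded_below:
  fixes C :: "'a::real_normed_vector \<Rightarrow> 'a"
  assumes C: "cop C" and W: "closed W" "subspace W" and inj: "\<And>w. w \<in> W \<Longrightarrow> w - C w = 0 \<Longrightarrow> w = 0"
  shows "\<exists>k>0. \<forall>w\<in>W. norm w \<le> k * norm (w - C w)"
proof (rule ccontr)
  interpret C: bounded_linear C using C cop_bl by blast
  assume neg: "\<not> ?thesis"
  have "\<exists>w\<in>W. norm w > (real n + 1) * norm (w - C w)" for n :: nat
  proof -
    have "real n + 1 > 0" by simp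
    then have "\<not> (\<forall>w\<in>W. norm w \<le> (real n + 1) * norm (w - C w))" using neg by blast
    then show ?thesis by (auto simp: not_le)
  qed
  then have "\<forall>n::nat. \<exists>w\<in>W. norm w > (real n + 1) * norm (w - C w)" by blast
  then obtain w where w: "\<And>n. w n \<in> W" "\<And>n. norm (w n) > (real n + 1) * norm (w n - C (w n))"
    by metis
  have wnz: "w n \<noteq> 0" for n using w(2)[of n] by auto
  define u where "u n = (1 / norm (w n)) *\<^sub>R w n" for n
  have u1: "norm (u n) = 1" for n using wnz by (simp add: u_def)
  have uW: "u n \<in> W" for n using W(2) w(1) by (simp add: u_def subspace_scale)
  have us: "norm (u n - C (u n)) < 1 / (real n + 1)" for n
  proof -
    have "u n - C (u n) = (1 / norm (w n)) *\<^sub>R (w n - C (w n))" by (simp add: u_def C.scaleR algebra_simps)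
    then have "norm (u n - C (u n)) = norm (w n - C (w n)) / norm (w n)" by simp
    also have "\<dots> < 1 / (real n + 1)" using w(2)[of n] wnz by (simp add: field_simps)
    finally show ?thesis .
  qed
  have "bounded (range u)" unfolding bounded_iff using u1 by auto
  then obtain r where r: "strict_mono r" "convergent (\<lambda>n. C (u (r n)))" using copD[OF C] by blast
  then obtain y where y: "(\<lambda>n. C (u (r n))) \<longlonglongrightarrow> y" unfolding convergent_def by blast
  have z: "(\<lambda>n. u (r n) - C (u (r n))) \<longlonglongrightarrow> 0"
  proof (rule Lim_null_comparison)
    show "\<forall>\<^sub>F n in sequentially. norm (u (r n) - C (u (r n))) \<le> 1 / (real n + 1)"
    proof (intro always_eventually allI)
      fix n
      have "real n \<le> real (r n)" using seq_suble[OF r(1)] by simp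
      then have "1 / (real (r n) + 1) \<le> 1 / (real n + 1)" by (simp add: frac_le)
      then show "norm (u (r n) - C (u (r n))) \<le> 1 / (real n + 1)" using us[of "r n"] by linarith
    qed
    show "(\<lambda>n. 1 / (real n + 1)) \<longlonglongrightarrow> 0"
      using LIMSEQ_inverse_real_of_nat by (simp add: inverse_eq_divide add.commute)
  qed
  have uy: "(\<lambda>n. u (r n)) \<longlonglongrightarrow> y"
  proof -
    have "(\<lambda>n. (u (r n) - C (u (r n))) + C (u (r n))) \<longlonglongrightarrow> 0 + y" by (intro tendsto_add z y)
    then show ?thesis by simp
  qed
  have yW: "y \<in> W" using W(1)[unfolded closed_sequential_limits, rule_format, of "\<lambda>n. u (r n)"] uW uy by blast
  have "(\<lambda>n. norm (u (r n))) \<longlonglongrightarrow> norm y" by (intro tendsto_norm uy)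
  then have ny: "norm y = 1" using u1 by (simp add: LIMSEQ_const_iff)
  have "(\<lambda>n. C (u (r n))) \<longlonglongrightarrow> C y" using C.tendsto[OF uy] .
  then have "C y = y" using y LIMSEQ_unique by blast
  then have "y = 0" using inj[OF yW] by simp
  then show False using ny by simp
qed

lemma cop_range_closed:
  fixes C :: "'a::real_normed_vector \<Rightarrow> 'a"
  assumes C: "cop C"
  shows "closed (range (\<lambda>x. x - C x))"
proof -
  interpret C: bounded_linear C using C cop_bl by blast
  define N where "N = {x. x - C x = 0}"
  have Nsub: "subspace N" unfolding N_def subspace_def by (auto simp: C.add C.scaleR C.zero algebra_simps)
  have Ncl: "closed N"
  proof -
    have "continuous_on UNIV (\<lambda>x. x - C x)" by (intro continuous_intros C.continuous_on continuous_on_id)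
    then show ?thesis unfolding N_def using closed_Collect_eq[of "\<lambda>x. x - C x" "\<lambda>x. 0"]
      by (simp add: continuous_on_const)
  qed
  have N0: "0 \<in> N" unfolding N_def by (simp add: C.zero)
  have claim: "\<exists>k. \<forall>x. infdist x N \<le> k * norm (x - C x)"
  proof (rule ccontr)
    assume neg: "\<not> ?thesis"
    have "\<exists>x. infdist x N > real n * norm (x - C x)" for n :: nat
    proof -
      have "\<not> (\<forall>x. infdist x N \<le> real n * norm (x - C x))" using neg by blast
      then show ?thesis by (auto simp: not_le)
    qed
    then have "\<forall>n::nat. \<exists>x. infdist x N > real n * norm (x - C x)" by blast
    then obtain x where x: "\<And>n. infdist (x n) N > real n * norm (x n - C (x n))" by metis
    have ipos: "infdist (x n) N > 0" for n
    proof -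
      have "0 \<le> real n * norm (x n - C (x n))" by simp
      then show ?thesis using x[of n] by linarith
    qed
    have "\<forall>n. \<exists>m\<in>N. dist (x n) m < 2 * infdist (x n) N"
      using infdist_near[of N] N0 ipos by (metis less_add_same_cancel1 mult_2 empty_iff)
    then obtain m where m: "\<And>n. m n \<in> N" "\<And>n. dist (x n) (m n) < 2 * infdist (x n) N" by metis
    define w where "w n = (1 / infdist (x n) N) *\<^sub>R (x n - m n)" for n
    have wb: "norm (w n) \<le> 2" for n
    proof -
      have "norm (w n) = norm (x n - m n) / infdist (x n) N"
        unfolding w_def norm_scaleR using ipos[of n] by simp
      also have "\<dots> \<le> 2" using m(2)[of n] ipos[of n] by (simp add: dist_norm field_simps)
      finally show ?thesis .
    qed
    have wd: "1 \<le> norm (w n - y)" if "y \<in> N" for n y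
    proof -
      have "m n + infdist (x n) N *\<^sub>R y \<in> N" using Nsub m(1) that by (intro subspace_add subspace_scale) auto
      then have "infdist (x n) N \<le> norm (x n - (m n + infdist (x n) N *\<^sub>R y))"
        using infdist_le by (metis dist_norm)
      also have "x n - (m n + infdist (x n) N *\<^sub>R y) = infdist (x n) N *\<^sub>R (w n - y)"
        using ipos[of n] by (simp add: w_def algebra_simps)
      finally show ?thesis using ipos[of n] by simp
    qed
    have ws: "norm (w n - C (w n)) < 1 / real n" if "n > 0" for n
    proof -
      have "C (m n) = m n" using m(1) unfolding N_def by simp
      then have "w n - C (w n) = (1 / infdist (x n) N) *\<^sub>R (x n - C (x n))"
        by (simp add: w_def C.scaleR C.diff algebra_simps)
      then have "norm (w n - C (w n)) = norm (x n - C (x n)) / infdist (x n) N"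
        using ipos[of n] by simp
      also have "\<dots> < 1 / real n" using x[of n] ipos[of n] that by (simp add: field_simps)
      finally show ?thesis .
    qed
    have "bounded (range w)" unfolding bounded_iff using wb by blast
    then obtain r where r: "strict_mono r" "convergent (\<lambda>n. C (w (r n)))" using copD[OF C] by blast
    then obtain y where y: "(\<lambda>n. C (w (r n))) \<longlonglongrightarrow> y" unfolding convergent_def by blast
    have z: "(\<lambda>n. w (r n) - C (w (r n))) \<longlonglongrightarrow> 0"
    proof (rule Lim_null_comparison)
      show "\<forall>\<^sub>F n in sequentially. norm (w (r n) - C (w (r n))) \<le> 1 / real n"
        unfolding eventually_sequentially
      proof (intro exI[of _ 1] allI impI)
        fix n :: nat assume n: "1 \<le> n"
        have rn: "real n \<le> real (r n)" using seq_suble[OF r(1), of n] by simp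
        then have "r n > 0" using n by simp
        then have "norm (w (r n) - C (w (r n))) < 1 / real (r n)" by (rule ws)
        also have "\<dots> \<le> 1 / real n" using rn n by (simp add: frac_le)
        finally show "norm (w (r n) - C (w (r n))) \<le> 1 / real n" by simp
      qed
      show "(\<lambda>n. 1 / real n) \<longlonglongrightarrow> 0" using lim_inverse_n' by simp
    qed
    have wy: "(\<lambda>n. w (r n)) \<longlonglongrightarrow> y"
    proof -
      have "(\<lambda>n. (w (r n) - C (w (r n))) + C (w (r n))) \<longlonglongrightarrow> 0 + y" by (intro tendsto_add z y)
      then show ?thesis by simp
    qed
    have "(\<lambda>n. C (w (r n))) \<longlonglongrightarrow> C y" using C.tendsto[OF wy] .
    then have "C y = y" using y LIMSEQ_unique by blast
    then have yN: "y \<in> N" unfolding N_def by simp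
    have "(\<lambda>n. norm (w (r n) - y)) \<longlonglongrightarrow> norm (y - y)" by (intro tendsto_intros wy)
    then have "(\<lambda>n. norm (w (r n) - y)) \<longlonglongrightarrow> 0" by simp
    then obtain n where "norm (norm (w (r n) - y)) < 1" using LIMSEQ_D[of _ 0 1] by fastforce
    then show False using wd[OF yN, of "r n"] by simp
  qed
  then obtain k where k: "\<And>x. infdist x N \<le> k * norm (x - C x)" by blast
  have pre: "\<exists>z. z - C z = x - C x \<and> norm z \<le> 2 * k * norm (x - C x)" for x
  proof (cases "x \<in> N")
    case True then show ?thesis using k[of x] unfolding N_def by (intro exI[of _ 0]) (simp add: C.zero)
  next
    case False
    have ip: "infdist x N > 0" using infdist_pos_not_in_closed[OF Ncl _ False] N0 by blast
    obtain m where m: "m \<in> N" "dist x m < 2 * infdist x N" using infdist_near[of N x "2 * infdist x N"] N0 ip by auto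
    have "(x - m) - C (x - m) = x - C x" using m(1) unfolding N_def by (simp add: C.diff algebra_simps)
    moreover have "norm (x - m) \<le> 2 * k * norm (x - C x)" using m(2) k[of x] by (simp add: dist_norm)
    ultimately show ?thesis by blast
  qed
  show ?thesis unfolding closed_sequential_limits
  proof (intro allI impI, elim conjE)
    fix y l assume ys: "\<forall>n. y n \<in> range (\<lambda>x. x - C x)" and yl: "y \<longlonglongrightarrow> l"
    have "\<exists>z. z - C z = y n \<and> norm z \<le> 2 * k * norm (y n)" for n
    proof -
      obtain x where "y n = x - C x" using ys by blast
      then show ?thesis using pre[of x] by simp
    qed
    then have "\<forall>n. \<exists>z. z - C z = y n \<and> norm z \<le> 2 * k * norm (y n)" by blast
    then obtain z where z: "\<And>n. z n - C (z n) = y n" "\<And>n. norm (z n) \<le> 2 * k * norm (y n)" by metis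
    obtain b where b: "\<And>n. norm (y n) \<le> b" using convergent_imp_bounded[OF yl] unfolding bounded_iff by blast
    have "norm (z n) \<le> \<bar>2 * k\<bar> * b" for n
    proof -
      have "2 * k * norm (y n) \<le> \<bar>2 * k\<bar> * norm (y n)" by (simp add: mult_right_mono)
      also have "\<dots> \<le> \<bar>2 * k\<bar> * b" using b[of n] by (simp add: mult_left_mono)
      finally show ?thesis using z(2)[of n] by simp
    qed
    then have "bounded (range z)" unfolding bounded_iff by blast
    then obtain r where r: "strict_mono r" "convergent (\<lambda>n. C (z (r n)))" using copD[OF C] by blast
    then obtain u where u: "(\<lambda>n. C (z (r n))) \<longlonglongrightarrow> u" unfolding convergent_def by blast
    have ylr: "(\<lambda>n. y (r n)) \<longlonglongrightarrow> l" using LIMSEQ_subseq_LIMSEQ[OF yl r(1)] by (simp add: o_def)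
    have zl: "(\<lambda>n. z (r n)) \<longlonglongrightarrow> l + u"
    proof -
      have "(\<lambda>n. y (r n) + C (z (r n))) \<longlonglongrightarrow> l + u" by (intro tendsto_add ylr u)
      moreover have "y (r n) + C (z (r n)) = z (r n)" for n using z(1)[of "r n"] by (simp add: algebra_simps)
      ultimately show ?thesis by simp
    qed
    have "(\<lambda>n. z (r n) - C (z (r n))) \<longlonglongrightarrow> (l + u) - C (l + u)"
      by (intro tendsto_diff zl C.tendsto)
    then have "(\<lambda>n. y (r n)) \<longlonglongrightarrow> (l + u) - C (l + u)" using z(1) by simp
    then have "l = (l + u) - C (l + u)" using ylr LIMSEQ_unique by blast
    then show "l \<in> range (\<lambda>x. x - C x)" by blast
  qed
qed




lemma cop_kernel_fin:
  fixes C :: "'a::real_normed_vector \<Rightarrow> 'a"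
  assumes C: "cop C"
  shows "\<exists>E. finite E \<and> independent E \<and> span E = {x. C x = x}"
proof -
  interpret C: bounded_linear C using C cop_bl by blast
  define N where "N = {x. C x = x}"
  have Nsub: "subspace N" unfolding N_def subspace_def by (auto simp: C.add C.scaleR C.zero)
  have "\<exists>F. finite F \<and> F \<subseteq> N \<and> N \<subseteq> span F"
  proof (rule ccontr)
    assume neg: "\<not> ?thesis"
    have "\<exists>x. finite F \<and> F \<subseteq> N \<longrightarrow> x \<in> N \<and> norm x = 1 \<and> (\<forall>w\<in>span F. 1/2 \<le> norm (x - w))" for F
    proof (cases "finite F \<and> F \<subseteq> N")
      case True
      have sF: "span F \<subseteq> N" using True Nsub by (simp add: span_minimal)
      moreover have "span F \<noteq> N" using neg True by blast
      ultimately show ?thesis using riesz_lemma[OF Nsub subspace_span closed_span_finite] True by blast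
    qed auto
    then obtain g where g: "\<And>F. finite F \<Longrightarrow> F \<subseteq> N \<Longrightarrow> g F \<in> N \<and> norm (g F) = 1 \<and> (\<forall>w\<in>span F. 1/2 \<le> norm (g F - w))"
      by metis
    define Fs where "Fs = rec_nat {} (\<lambda>_ F. insert (g F) F)"
    have Fs0: "Fs 0 = {}" and FsS: "Fs (Suc n) = insert (g (Fs n)) (Fs n)" for n by (simp_all add: Fs_def)
    have Fsfin: "finite (Fs n) \<and> Fs n \<subseteq> N" for n
      by (induction n) (use g in \<open>auto simp: Fs0 FsS\<close>)
    define x where "x n = g (Fs n)" for n
    have xin: "m < n \<Longrightarrow> x m \<in> Fs n" for m n
    proof (induction n)
      case 0 then show ?case by simp
    next
      case (Suc n) then show ?case by (auto simp: FsS x_def less_Suc_eq)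
    qed
    have xN: "x n \<in> N" "norm (x n) = 1" for n using g Fsfin unfolding x_def by blast+
    have sep: "1/2 \<le> norm (x n - x m)" if "m < n" for m n
      using g[of "Fs n"] Fsfin[of n] span_base[OF xin[OF that]] unfolding x_def by blast
    obtain m n where mn: "m < n" "norm (C (x n) - C (x m)) < 1/2"
      using cop_sep[OF C, of x] xN(2) by fastforce
    have "C (x n) = x n" "C (x m) = x m" using xN(1) unfolding N_def by auto
    then show False using mn sep[OF mn(1)] by simp
  qed
  then obtain F where F: "finite F" "F \<subseteq> N" "N \<subseteq> span F" by blast
  obtain B where B: "B \<subseteq> F" "independent B" "F \<subseteq> span B" using maximal_independent_subset[of F] by blast
  have "span B \<subseteq> N" using B(1) F(2) Nsub by (simp add: span_minimal)
  moreover have "N \<subseteq> span B" using F(3) B(3) span_minimal[OF B(3) subspace_span] by blast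
  ultimately have "span B = N" by blast
  moreover have "finite B" using B(1) F(1) finite_subset by blast
  ultimately show ?thesis using B(2) unfolding N_def by blast
qed

lemma bop_from_unique:
  fixes F :: "'a::complex_banach \<Rightarrow> 'b::complex_banach" and G :: "'b \<Rightarrow> 'c::complex_banach"
    and H :: "'a \<Rightarrow> 'c"
  assumes W: "subspace W" "\<And>c w. w \<in> W \<Longrightarrow> cscale c w \<in> W"
    and FW: "\<And>x. F x \<in> W" and FG: "\<And>x. G (F x) = H x"
    and G: "bop G" and H: "bop H"
    and inj: "\<And>w. w \<in> W \<Longrightarrow> G w = 0 \<Longrightarrow> w = 0"
    and bnd: "\<And>w. w \<in> W \<Longrightarrow> norm w \<le> k * norm (G w)"
  shows "bop F"
proof -
  interpret G: bounded_linear G using G bop_bl by blast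
  interpret H: bounded_linear H using H bop_bl by blast
  obtain K where K: "\<And>x. norm (H x) \<le> norm x * K" using H.bounded by blast
  have uniq: "a = b" if "a \<in> W" "b \<in> W" "G a = G b" for a b
  proof -
    have "a - b \<in> W" using W(1) that by (simp add: subspace_diff)
    moreover have "G (a - b) = 0" using that by (simp add: G.diff)
    ultimately show ?thesis using inj by fastforce
  qed
  have add: "F (x + y) = F x + F y" for x y
    by (rule uniq) (auto simp: FW subspace_add[OF W(1)] FG G.add H.add)
  have scl: "F (r *\<^sub>R x) = r *\<^sub>R F x" for r x
    by (rule uniq) (auto simp: FW subspace_scale[OF W(1)] FG G.scaleR H.scaleR)
  have cs: "F (cscale c x) = cscale c (F x)" for c x
    by (rule uniq) (auto simp: FW W(2) FG bop_cs[OF G] bop_cs[OF H])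
  have "norm (F x) \<le> norm x * (\<bar>k\<bar> * K)" for x
  proof -
    have "norm (F x) \<le> k * norm (H x)" using bnd[OF FW[of x]] by (simp add: FG)
    also have "\<dots> \<le> \<bar>k\<bar> * norm (H x)" by (simp add: mult_right_mono)
    also have "\<dots> \<le> \<bar>k\<bar> * (norm x * K)" using K[of x] by (simp add: mult_left_mono)
    finally show ?thesis by (simp add: ac_simps)
  qed
  then have "bounded_linear F" using add scl by (intro bounded_linear_intro) auto
  then show ?thesis using cs by (simp add: bop_def)
qed




lemma subspace_kernel:
  assumes "bounded_linear f" shows "subspace {x. f x = 0}"
proof -
  interpret f: bounded_linear f by fact
  show ?thesis unfolding subspace_def by (auto simp: f.add f.scaleR f.zero)
qed

lemma closed_kernel: "bounded_linear f \<Longrightarrow> closed {x. f x = (0::'b::real_normed_vector)}"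
  using closed_Collect_eq[of f "\<lambda>x. 0"] by (simp add: continuous_on_const bounded_linear.continuous_on[OF _ continuous_on_id])

lemma subspace_range_bl:
  assumes "bounded_linear f" shows "subspace (range f)"
proof -
  interpret f: bounded_linear f by fact
  show ?thesis unfolding subspace_def
  proof (intro conjI ballI allI)
    show "0 \<in> range f" using f.zero by (metis rangeI)
  next
    fix x y assume "x \<in> range f" "y \<in> range f"
    then show "x + y \<in> range f" by (auto simp: f.add[symmetric])
  next
    fix c x assume "x \<in> range f"
    then show "c *\<^sub>R x \<in> range f" by (auto simp: f.scaleR[symmetric])
  qed
qed

lemma riesz_decomp:
  fixes C :: "'a::complex_banach \<Rightarrow> 'a"
  assumes Cc: "cop C" and Cb: "bop C"
  shows "\<exists>B Q E. bop B \<and> bop Q \<and> finite E \<and> independent E \<and> (\<forall>x. Q x \<in> span E)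
           \<and> (\<forall>x. B x - C (B x) = x - Q x)"
proof -
  define L where "L x = x - C x" for x
  have Lb: "bop L" unfolding L_def[abs_def] by (rule bop_diff[OF bop_id Cb])
  have Lnb: "bop (L ^^ n)" for n
  proof (induction n)
    case 0 then show ?case using bop_id by (simp add: id_def)
  next
    case (Suc n) then show ?case using bop_comp[OF Lb Suc] by (simp add: o_def)
  qed
  have Lnl: "linear (L ^^ n)" for n using Lnb[of n] bop_bl bounded_linear.linear by blast
  have Ln0: "(L ^^ n) 0 = 0" for n using Lnl[of n] by (simp add: linear_0)
  have comp: "(L ^^ (a + b)) x = (L ^^ a) ((L ^^ b) x)" for a b x by (simp add: funpow_add)
  have mono0: "(L ^^ b) x = 0" if "(L ^^ a) x = 0" "a \<le> b" for a b x
  proof -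
    have "(L ^^ b) x = (L ^^ ((b - a) + a)) x" using that(2) by simp
    also have "\<dots> = 0" by (simp only: comp that(1) Ln0)
    finally show ?thesis .
  qed
  have monoR: "y \<in> range (L ^^ a)" if y: "y \<in> range (L ^^ b)" and ab: "a \<le> b" for a b y
  proof -
    obtain z where "y = (L ^^ b) z" using y by blast
    also have "\<dots> = (L ^^ (a + (b - a))) z" using ab by simp
    also have "\<dots> = (L ^^ a) ((L ^^ (b - a)) z)" by (rule comp)
    finally show ?thesis by blast
  qed
  have LSuc: "(L ^^ Suc n) x = (L ^^ n) (L x)" for n x by (simp only: funpow_Suc_right o_def)
  have LSuc': "(L ^^ Suc n) x = L ((L ^^ n) x)" for n x by simp
  have Cbl: "bounded_linear C" using Cb bop_bl by blast
  interpret Cl: bounded_linear C by fact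
  have Lbl: "bounded_linear L" using Lb bop_bl by blast
  interpret Ll: bounded_linear L by fact
  have Lnbl: "bounded_linear (L ^^ n)" for n using Lnb bop_bl by blast
  obtain D where D: "\<And>n. cop (D n)" "\<And>n. (L ^^ n) = (\<lambda>x. x - D n x)"
    using cop_pow[OF Cc] unfolding L_def[symmetric] by metis
  have Nsub: "subspace {x. (L ^^ n) x = 0}" for n by (rule subspace_kernel[OF Lnbl])
  have Ncl: "closed {x. (L ^^ n) x = 0}" for n by (rule closed_kernel[OF Lnbl])
  have Rsub: "subspace (range (L ^^ n))" for n by (rule subspace_range_bl[OF Lnbl])
  have Rcl: "closed (range (L ^^ n))" for n using cop_range_closed[OF D(1)[of n]] by (simp add: D(2))
  have "\<exists>pa. \<forall>x. (L ^^ Suc pa) x = 0 \<longrightarrow> (L ^^ pa) x = 0"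
  proof (rule ccontr)
    assume neg: "\<not> ?thesis"
    have "\<exists>x. x \<in> {x. (L ^^ Suc p) x = 0} \<and> norm x = 1 \<and> (\<forall>w\<in>{x. (L ^^ p) x = 0}. 1/2 \<le> norm (x - w))" for p
    proof -
      have "{x. (L ^^ p) x = 0} \<subseteq> {x. (L ^^ Suc p) x = 0}" using mono0[of p _ "Suc p"] by auto
      moreover have "{x. (L ^^ p) x = 0} \<noteq> {x. (L ^^ Suc p) x = 0}" using neg by blast
      ultimately show ?thesis using riesz_lemma[OF Nsub Nsub Ncl] by blast
    qed
    then obtain x where x: "\<And>p. (L ^^ Suc p) (x p) = 0" "\<And>p. norm (x p) = 1"
      "\<And>p w. (L ^^ p) w = 0 \<Longrightarrow> 1/2 \<le> norm (x p - w)" by (simp add: mem_Collect_eq) metis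
    obtain m n where mn: "m < n" "norm (C (x n) - C (x m)) < 1/2"
      using cop_sep[OF Cc, of x] x(2) by fastforce
    define w where "w = L (x n) + x m - L (x m)"
    have "(L ^^ n) (L (x n)) = 0" using x(1)[of n] LSuc by simp
    moreover have "(L ^^ n) (x m) = 0" using mono0[OF x(1)[of m]] mn(1) by simp
    moreover have "(L ^^ n) (L (x m)) = 0" using mono0[OF x(1)[of m], of "Suc n"] mn(1) LSuc by simp
    ultimately have "(L ^^ n) w = 0" unfolding w_def using Lnl[of n]
      by (simp add: linear_add linear_diff)
    then have "1/2 \<le> norm (x n - w)" by (rule x(3))
    also have "x n - w = C (x n) - C (x m)" by (simp add: w_def L_def)
    finally show False using mn(2) by simp
  qed
  then obtain pa where pa: "\<And>x. (L ^^ Suc pa) x = 0 \<Longrightarrow> (L ^^ pa) x = 0" by blast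
  have "\<exists>qd. range (L ^^ qd) \<subseteq> range (L ^^ Suc qd)"
  proof (rule ccontr)
    assume neg: "\<not> ?thesis"
    have "\<exists>x. x \<in> range (L ^^ q) \<and> norm x = 1 \<and> (\<forall>w\<in>range (L ^^ Suc q). 1/2 \<le> norm (x - w))" for q
    proof -
      have "range (L ^^ Suc q) \<subseteq> range (L ^^ q)" using monoR[of _ "Suc q" q] by auto
      moreover have "range (L ^^ Suc q) \<noteq> range (L ^^ q)" using neg by blast
      ultimately show ?thesis using riesz_lemma[OF Rsub Rsub Rcl] by blast
    qed
    then obtain x where x: "\<And>q. x q \<in> range (L ^^ q)" "\<And>q. norm (x q) = 1"
      "\<And>q w. w \<in> range (L ^^ Suc q) \<Longrightarrow> 1/2 \<le> norm (x q - w)" by metis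
    obtain m n where mn: "m < n" "norm (C (x n) - C (x m)) < 1/2"
      using cop_sep[OF Cc, of x] x(2) by fastforce
    define w where "w = L (x m) + x n - L (x n)"
    have "L (x m) \<in> range (L ^^ Suc m)"
    proof -
      obtain z where "x m = (L ^^ m) z" using x(1)[of m] by blast
      then have "L (x m) = (L ^^ Suc m) z" by simp
      then show ?thesis by blast
    qed
    moreover have "x n \<in> range (L ^^ Suc m)" using monoR[OF x(1)[of n], of "Suc m"] mn(1) by (simp only: Suc_le_eq)
    moreover have "L (x n) \<in> range (L ^^ Suc m)"
    proof -
      obtain z where "x n = (L ^^ n) z" using x(1)[of n] by blast
      then have "L (x n) = (L ^^ Suc n) z" by simp
      then have "L (x n) \<in> range (L ^^ Suc n)" by blast
      then show ?thesis using monoR[of "L (x n)" "Suc n" "Suc m"] mn(1) by (simp only: Suc_le_mono less_imp_le)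
    qed
    ultimately have "w \<in> range (L ^^ Suc m)" unfolding w_def
      by (intro subspace_add subspace_diff Rsub)
    then have "1/2 \<le> norm (x m - w)" by (rule x(3))
    also have "x m - w = - (C (x n) - C (x m))" by (simp add: w_def L_def)
    finally show False using mn(2) by (simp add: norm_minus_commute)
  qed
  then obtain qd where qd: "range (L ^^ qd) \<subseteq> range (L ^^ Suc qd)" by blast
  have S1: "(L ^^ (pa + k)) x = 0 \<Longrightarrow> (L ^^ pa) x = 0" for k x
  proof (induction k arbitrary: x)
    case 0 then show ?case by simp
  next
    case (Suc k)
    have "(L ^^ Suc pa) ((L ^^ k) x) = (L ^^ (pa + Suc k)) x" by (simp add: comp[symmetric] ac_simps)
    then have "(L ^^ pa) ((L ^^ k) x) = 0" using Suc.prems pa by simp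
    then have "(L ^^ (pa + k)) x = 0" by (simp add: comp)
    then show ?case by (rule Suc.IH)
  qed
  have S2: "range (L ^^ qd) \<subseteq> range (L ^^ (qd + k))" for k
  proof (induction k)
    case 0 then show ?case by simp
  next
    case (Suc k)
    show ?case
    proof
      fix y assume "y \<in> range (L ^^ qd)"
      then obtain z where z: "y = (L ^^ (qd + k)) z" using Suc.IH by blast
      have "(L ^^ qd) z \<in> range (L ^^ Suc qd)" using qd by blast
      then obtain u where u: "(L ^^ qd) z = (L ^^ Suc qd) u" by blast
      have "y = (L ^^ k) ((L ^^ qd) z)" using z by (simp add: comp[symmetric] ac_simps)
      also have "\<dots> = (L ^^ (k + Suc qd)) u" by (simp only: u comp)
      finally show "y \<in> range (L ^^ (qd + Suc k))" by (simp add: ac_simps)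
    qed
  qed
  define p where "p = pa + qd"
  have K: "(L ^^ (p + j)) x = 0 \<Longrightarrow> (L ^^ p) x = 0" for j x
  proof -
    assume "(L ^^ (p + j)) x = 0"
    then have "(L ^^ (pa + (qd + j))) x = 0" by (simp add: p_def ac_simps)
    then have "(L ^^ pa) x = 0" by (rule S1)
    then show ?thesis using mono0 p_def by simp
  qed
  have R: "range (L ^^ p) \<subseteq> range (L ^^ (p + j))" for j
  proof
    fix y assume "y \<in> range (L ^^ p)"
    then have "y \<in> range (L ^^ qd)" using monoR p_def by simp
    then have "y \<in> range (L ^^ (qd + (pa + j)))" using S2 by blast
    then show "y \<in> range (L ^^ (p + j))" by (simp add: p_def ac_simps)
  qed
  define W where "W = range (L ^^ p)"
  have Wsub: "subspace W" unfolding W_def by (rule Rsub)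
  have Wcs: "cscale c w \<in> W" if w: "w \<in> W" for c w
  proof -
    obtain z where "w = (L ^^ p) z" using w W_def by blast
    then have "cscale c w = (L ^^ p) (cscale c z)" using bop_cs[OF Lnb] by simp
    then show ?thesis unfolding W_def by blast
  qed
  have inj1: "w = 0" if w: "w \<in> W" and w0: "(L ^^ p) w = 0" for w
  proof -
    obtain y where y: "w = (L ^^ p) y" using w W_def by blast
    have "(L ^^ (p + p)) y = 0" using w0 y by (simp add: comp)
    then have "(L ^^ p) y = 0" by (rule K)
    then show ?thesis using y by simp
  qed
  have inj2: "w = 0" if "w \<in> W" "L w = 0" for w
  proof -
    have "(L ^^ (p + 1)) w = 0" using that(2) LSuc[of p w] Ln0 by simp
    then have "(L ^^ p) w = 0" by (rule K)
    then show ?thesis using inj1 that(1) by blast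
  qed
  obtain k1 where k1: "\<And>w. w \<in> W \<Longrightarrow> norm w \<le> k1 * norm ((L ^^ p) w)"
  proof -
    have "\<exists>k>0. \<forall>w\<in>W. norm w \<le> k * norm (w - D p w)"
      by (rule cop_bounded_below[OF D(1) Rcl[of p, folded W_def] Wsub]) (use inj1 D(2) in auto)
    then show ?thesis using that D(2) by auto
  qed
  obtain k2 where k2: "\<And>w. w \<in> W \<Longrightarrow> norm w \<le> k2 * norm (L w)"
  proof -
    have "\<exists>k>0. \<forall>w\<in>W. norm w \<le> k * norm (w - C w)"
      by (rule cop_bounded_below[OF Cc Rcl[of p, folded W_def] Wsub]) (use inj2 L_def in auto)
    then show ?thesis using that L_def by auto
  qed
  have exP: "\<exists>r. r \<in> W \<and> (L ^^ p) r = (L ^^ p) x" for x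
  proof -
    have "(L ^^ p) x \<in> range (L ^^ (p + p))" using R by blast
    then obtain y where "(L ^^ p) x = (L ^^ (p + p)) y" by blast
    then have "(L ^^ p) ((L ^^ p) y) = (L ^^ p) x" by (simp only: comp)
    moreover have "(L ^^ p) y \<in> W" unfolding W_def by blast
    ultimately show ?thesis by blast
  qed
  define P where "P x = (SOME r. r \<in> W \<and> (L ^^ p) r = (L ^^ p) x)" for x
  have P: "P x \<in> W" "(L ^^ p) (P x) = (L ^^ p) x" for x
    using someI_ex[OF exP[of x]] unfolding P_def by blast+
  have Pb: "bop P"
    by (rule bop_from_unique[OF Wsub Wcs P(1) P(2) Lnb Lnb inj1 k1])
  have exB: "\<exists>b. b \<in> W \<and> L b = P x" for x
  proof -
    have "P x \<in> range (L ^^ (p + 1))" using R P(1) W_def by blast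
    then obtain z where "P x = (L ^^ Suc p) z" by auto
    then have "P x = L ((L ^^ p) z)" by simp
    moreover have "(L ^^ p) z \<in> W" unfolding W_def by blast
    ultimately show ?thesis by metis
  qed
  define B where "B x = (SOME b. b \<in> W \<and> L b = P x)" for x
  have Bp: "B x \<in> W" "L (B x) = P x" for x
    using someI_ex[OF exB[of x]] unfolding B_def by blast+
  have Bb: "bop B"
    by (rule bop_from_unique[OF Wsub Wcs Bp(1) Bp(2) Lb Pb inj2 k2])
  define Q where "Q x = x - P x" for x
  have Qb: "bop Q" unfolding Q_def[abs_def] by (rule bop_diff[OF bop_id Pb])
  obtain E where E: "finite E" "independent E" "span E = {x. D p x = x}"
    using cop_kernel_fin[OF D(1)] by blast
  have QE: "Q x \<in> span E" for x
  proof -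
    have "(L ^^ p) (Q x) = 0" using P(2)[of x] Lnl[of p] by (simp add: Q_def linear_diff)
    then show ?thesis using E(3) D(2) by simp
  qed
  have "B x - C (B x) = x - Q x" for x using Bp(2)[of x] by (simp add: L_def Q_def)
  then show ?thesis using Bb Qb E(1,2) QE by blast
qed




lemma compact_op_cop:
  fixes T :: "'a::complex_banach \<Rightarrow> 'a"
  assumes "compact_op T"
  shows "cop T"
proof -
  have Tb: "bop T" and cpt: "compact (closure (T ` cball 0 1))" using assms unfolding compact_op_def by auto
  interpret T: bounded_linear T using Tb bop_bl by blast
  have sc: "seq_compact (closure (T ` cball 0 1))" by (rule compact_imp_seq_compact[OF cpt])
  show ?thesis unfolding cop_def
  proof (intro conjI allI impI)
    show "bounded_linear T" by (rule T.bounded_linear_axioms)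
    fix x :: "nat \<Rightarrow> 'a" assume "bounded (range x)"
    then obtain b where b: "b > 0" "\<And>n. norm (x n) \<le> b" unfolding bounded_pos by blast
    define u where "u n = (1 / b) *\<^sub>R x n" for n
    have "u n \<in> cball 0 1" for n using b by (simp add: u_def)
    then have "\<forall>n. T (u n) \<in> closure (T ` cball 0 1)" using closure_subset by blast
    then obtain l r where r: "strict_mono r" "((\<lambda>n. T (u n)) \<circ> r) \<longlonglongrightarrow> l"
      using seq_compactE[OF sc] by metis
    have "(\<lambda>n. b *\<^sub>R T (u (r n))) \<longlonglongrightarrow> b *\<^sub>R l" using r(2) by (intro tendsto_intros) (simp add: o_def)
    moreover have "b *\<^sub>R T (u (r n)) = T (x (r n))" for n using b by (simp add: u_def T.scaleR)
    ultimately have "convergent (\<lambda>n. T (x (r n)))" unfolding convergent_def by auto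
    then show "\<exists>r. strict_mono r \<and> convergent (\<lambda>n. T (x (r n)))" using r(1) by blast
  qed
qed

lemma main_inclusion:
  fixes T :: "'x::complex_banach \<Rightarrow> 'x"
    and S :: "'y::complex_banach \<Rightarrow> 'y"
    and E :: "'y \<times> 'y2::complex_banach \<Rightarrow> 'x \<times> 'x2::complex_banach"
    and F :: "'x \<times> 'x2 \<Rightarrow> 'y \<times> 'y2"
  assumes Tc: "cop T" and Tb: "bop T" and Sb: "bop S" and S0: "S \<noteq> (\<lambda>y. 0)"
    and eq: "equiv_after_ext_via T S E F"
  shows "T \<in> op_ideal S"
proof -
  have Eb: "bop E" and Fb: "bop F" using eq unfolding equiv_after_ext_via_def invertible_op_def by auto
  obtain H where H: "bop H" "H \<circ> E = id" "E \<circ> H = id"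
    using eq unfolding equiv_after_ext_via_def invertible_op_def by blast
  obtain G where G: "bop G" "G \<circ> F = id" "F \<circ> G = id"
    using eq unfolding equiv_after_ext_via_def invertible_op_def by blast
  have e0: "(\<lambda>(x, x'). (T x, x')) = E \<circ> (\<lambda>(y, y'). (S y, y')) \<circ> F"
    using eq unfolding equiv_after_ext_via_def by blast
  have e1: "(T x, x') = E (S (fst (F (x, x'))), snd (F (x, x')))" for x x'
  proof -
    have "(\<lambda>(x, x'). (T x, x')) (x, x') = (E \<circ> (\<lambda>(y, y'). (S y, y')) \<circ> F) (x, x')" using e0 by simp
    then show ?thesis by (simp add: case_prod_beta)
  qed
  have FG: "F (G p) = p" for p using G(3) by (metis comp_apply id_apply)
  have HE: "H (E p) = p" for p using H(2) by (metis comp_apply id_apply)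
  have e2: "E (S a, b) = (T (fst (G (a, b))), snd (G (a, b)))" for a b
    using e1[of "fst (G (a, b))" "snd (G (a, b))"] by (simp add: FG)
  have e3: "H (T x, x') = (S (fst (F (x, x'))), snd (F (x, x')))" for x x'
    using arg_cong[OF e1[of x x'], of H] by (simp add: HE)
  interpret El: bounded_linear E using Eb bop_bl by blast
  interpret Sl: bounded_linear S using Sb bop_bl by blast
  interpret Tl: bounded_linear T using Tb bop_bl by blast
  define A where "A x = fst (E (S (fst (F (x, 0))), 0))" for x
  define K where "K u = fst (G (0, snd (H (u, 0))))" for u
  have key: "T x = A x + T (K (T x))" for x
  proof -
    have "T x = fst (E (S (fst (F (x, 0))), snd (F (x, 0))))" using e1[of x 0] by (metis fst_conv)
    also have "\<dots> = A x + fst (E (S 0, snd (F (x, 0))))"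
      using El.add[of "(S (fst (F (x, 0))), 0)" "(0, snd (F (x, 0)))"] by (simp add: A_def Sl.zero)
    also have "E (S 0, snd (F (x, 0))) = (T (fst (G (0, snd (F (x, 0))))), snd (G (0, snd (F (x, 0)))))"
      by (rule e2)
    also have "snd (F (x, 0)) = snd (H (T x, 0))" using e3[of x 0] by simp
    finally show ?thesis by (simp add: K_def)
  qed
  have Ab: "bop A" unfolding A_def[abs_def]
    by (intro bop_comp[OF bop_fst] bop_comp[OF Eb] bop_comp[OF bop_inl] bop_comp[OF Sb] bop_comp[OF Fb] bop_inl)
  have Kb: "bop K" unfolding K_def[abs_def]
    by (intro bop_comp[OF bop_fst] bop_comp[OF G(1)] bop_comp[OF bop_inr] bop_comp[OF bop_snd] bop_comp[OF H(1)] bop_inl)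
  have AI: "A \<in> op_ideal S"
  proof -
    have "(\<lambda>z. (\<lambda>y. fst (E (y, 0))) (S ((\<lambda>x. fst (F (x, 0))) z))) \<in> op_ideal S"
      by (rule op_ideal_single)
        (intro bop_comp[OF bop_fst] bop_comp[OF Eb] bop_inl bop_comp[OF Fb])+
    then show ?thesis by (simp add: A_def[abs_def])
  qed
  define C where "C x = K (T x)" for x
  have Cc: "cop C" unfolding C_def[abs_def] by (rule cop_comp_left[OF Tc bop_bl[OF Kb]])
  have Cb: "bop C" unfolding C_def[abs_def] by (rule bop_comp[OF Kb Tb])
  obtain B Q Es where BQ: "bop B" "bop Q" "finite Es" "independent Es" "\<And>x. Q x \<in> span Es"
    "\<And>x. B x - C (B x) = x - Q x"
    using riesz_decomp[OF Cc Cb] by blast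
  have rep: "T x = A (B x) + T (Q x)" for x
  proof -
    have "T x = T (x - Q x) + T (Q x)" by (simp add: Tl.diff)
    also have "T (x - Q x) = T (B x) - T (K (T (B x)))"
    proof -
      have "x - Q x = B x - K (T (B x))" using BQ(6)[of x] by (simp add: C_def)
      then show ?thesis by (simp only: Tl.diff)
    qed
    also have "\<dots> = A (B x)" by (subst diff_eq_eq) (rule key)
    finally show ?thesis .
  qed
  have h1: "(\<lambda>z. A (B z)) \<in> op_ideal S" using op_ideal_comp[OF AI bop_id BQ(1)] by simp
  have h2: "(\<lambda>z. T (Q z)) \<in> op_ideal S"
    using finite_rank_in_ideal[OF Sb S0 BQ(2) Tb bop_id BQ(3,4,5)] by simp
  have "(\<lambda>z. A (B z) + T (Q z)) \<in> op_ideal S" by (rule op_ideal_add[OF h1 h2])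
  moreover have "(\<lambda>z. A (B z) + T (Q z)) = T" by (rule ext) (rule rep[symmetric])
  ultimately show ?thesis by simp
qed

lemma equiv_swap:
  fixes T :: "'x::complex_banach \<Rightarrow> 'x"
    and S :: "'y::complex_banach \<Rightarrow> 'y"
    and E :: "'y \<times> 'y2::complex_banach \<Rightarrow> 'x \<times> 'x2::complex_banach"
    and F :: "'x \<times> 'x2 \<Rightarrow> 'y \<times> 'y2"
  assumes eq: "equiv_after_ext_via T S E F"
  shows "\<exists>(H :: 'x \<times> 'x2 \<Rightarrow> 'y \<times> 'y2) (G :: 'y \<times> 'y2 \<Rightarrow> 'x \<times> 'x2). equiv_after_ext_via S T H G"
proof -
  have Eb: "bop E" and Fb: "bop F" using eq unfolding equiv_after_ext_via_def invertible_op_def by auto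
  obtain H where H: "bop H" "H \<circ> E = id" "E \<circ> H = id"
    using eq unfolding equiv_after_ext_via_def invertible_op_def by blast
  obtain G where G: "bop G" "G \<circ> F = id" "F \<circ> G = id"
    using eq unfolding equiv_after_ext_via_def invertible_op_def by blast
  have e0: "(\<lambda>(x, x'). (T x, x')) = E \<circ> (\<lambda>(y, y'). (S y, y')) \<circ> F"
    using eq unfolding equiv_after_ext_via_def by blast
  have "H \<circ> (\<lambda>(x, x'). (T x, x')) \<circ> G = (H \<circ> E) \<circ> (\<lambda>(y, y'). (S y, y')) \<circ> (F \<circ> G)"
    by (simp add: e0 comp_assoc)
  also have "\<dots> = (\<lambda>(y, y'). (S y, y'))" by (simp add: H(2) G(3))
  finally have "(\<lambda>(y, y'). (S y, y')) = H \<circ> (\<lambda>(x, x'). (T x, x')) \<circ> G" by simp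
  moreover have "invertible_op H" unfolding invertible_op_def using H Eb by blast
  moreover have "invertible_op G" unfolding invertible_op_def using G Fb by blast
  ultimately show ?thesis unfolding equiv_after_ext_via_def by blast
qed

theorem theorem2p5:
  fixes T :: "'x::complex_banach \<Rightarrow> 'x"
    and S :: "'y::complex_banach \<Rightarrow> 'y"
    and E :: "'y \<times> 'y2::complex_banach \<Rightarrow> 'x \<times> 'x2::complex_banach"
    and F :: "'x \<times> 'x2 \<Rightarrow> 'y \<times> 'y2"
  assumes "compact_op T" and "T \<noteq> (\<lambda>x. 0)"
    and "compact_op S" and "S \<noteq> (\<lambda>y. 0)"
    and "equiv_after_ext_via T S E F"
  shows "(op_ideal T :: ('z1::complex_banach \<Rightarrow> 'z2::complex_banach) set) = op_ideal S"
proof -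
  have Tb: "bop T" and Sb: "bop S" using assms(1,3) unfolding compact_op_def by auto
  have TS: "T \<in> op_ideal S"
    by (rule main_inclusion[OF compact_op_cop[OF assms(1)] Tb Sb assms(4) assms(5)])
  obtain H :: "'x \<times> 'x2 \<Rightarrow> 'y \<times> 'y2" and G :: "'y \<times> 'y2 \<Rightarrow> 'x \<times> 'x2"
    where "equiv_after_ext_via S T H G" using equiv_swap[OF assms(5)] by blast
  then have ST: "S \<in> op_ideal T"
    by (rule main_inclusion[OF compact_op_cop[OF assms(3)] Sb Tb assms(2)])
  show ?thesis
  proof
    show "(op_ideal T :: ('z1 \<Rightarrow> 'z2) set) \<subseteq> op_ideal S" using op_ideal_trans[OF TS] by blast
    show "(op_ideal S :: ('z1 \<Rightarrow> 'z2) set) \<subseteq> op_ideal T" using op_ideal_trans[OF ST] by blast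
  qed
qed


end
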